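(* Let $(\mu_N)$ be a sequence of deterministic initial configurations (Dirac masses on $\Omega_N$). For $H\in C^2(\mathbb T)$, $\delta>0$, $\varepsilon>0$ let $$\mathcal C_{H,\delta,\varepsilon}=\Big\{\pi\in D([0,T],\mathcal M):\ \sup_{s\le t\le s+\delta}|\langle\pi_t,H\rangle-\langle\pi_s,H\rangle|\le\varepsilon\ \ \forall s\in[0,T]\Big\}.$$ Then for every $\varepsilon>0$ and every $H\in C^2(\mathbb T)$, $$\lim_{\delta\downarrow0}\limsup_{N\to\infty}\frac1N\log\mathbb Q_{\mu_N}\big[\pi\notin\mathcal C_{H,\delta,\varepsilon}\big]=-\infty.$$
   Context: $\mathbb T_N=\mathbb Z/N\mathbb Z$, $\Omega_N=\{0,1\}^{\mathbb T_N}$, $\mathbb T=[0,1)$ the continuous torus, $T>0$ fixed (times $t$ range in $[0,T]$). SSEP with slow bond: Markov process with generator $N^2L_N$, $L_Nf(\eta)=\sum_x\xi^N_x[f(\eta^{x,x+1})-f(\eta)]$, $\xi^N_x=1$ for $x\ne-1$, $\xi^N_{-1}=1/N$, $\eta^{x,x+1}$ exchanging occupations at $x,x+1$. $\mathcal M$ = positive measures on $\mathbb T$ of mass $\le1$; $\langle\pi,H\rangle=\int H\,d\pi$; $\mathbb Q_{\mu_N}$ is the law on $D([0,T],\mathcal M)$ of $\pi^N_t=\frac1N\sum_x\eta_t(x)\delta_{x/N}$ with $\eta_0\sim\mu_N$. *)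

theory Defs
  imports "HOL-Probability.Probability"
begin

text \<open>Discrete torus T_N = {0..<N}, site x has right neighbour (x+1) mod N.
  The slow bond is the bond {-1,0} = {N-1, 0}, i.e. bond index N-1.
  A configuration is a function nat => bool (only sites < N matter).\<close>

definition swap_conf :: "nat \<Rightarrow> nat \<Rightarrow> (nat \<Rightarrow> bool) \<Rightarrow> (nat \<Rightarrow> bool)" where
  "swap_conf N x \<eta> = \<eta>(x := \<eta> ((x + 1) mod N), ((x + 1) mod N) := \<eta> x)"

text \<open>Uniformised (graphical) construction of the SSEP with slow bond and
  generator N^2 L_N: a Poisson clock of total rate N^3 (exponential holding
  times); at each ring a bond x is chosen uniformly in T_N; the exchange on
  bond x is performed, except for the slow bond N-1, where it is performed
  only if an independent coin with success probability 1/N succeeds.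
  Every bond x /= N-1 thus fires at rate N^2, the slow bond at rate N^2 * (1/N) = N.\<close>

definition step_conf :: "nat \<Rightarrow> nat \<times> bool \<Rightarrow> (nat \<Rightarrow> bool) \<Rightarrow> (nat \<Rightarrow> bool)" where
  "step_conf N xc \<eta> = (if fst xc \<noteq> N - 1 \<or> snd xc then swap_conf N (fst xc) \<eta> else \<eta>)"

definition step_pmf :: "nat \<Rightarrow> (nat \<times> bool) pmf" where
  "step_pmf N = pair_pmf (pmf_of_set {..<N}) (bernoulli_pmf (1 / real N))"

definition step_measure :: "nat \<Rightarrow> (real \<times> (nat \<times> bool)) measure" where
  "step_measure N =
     density lborel (exponential_density (real N ^ 3)) \<Otimes>\<^sub>M measure_pmf (step_pmf N)"

definition ssep_space :: "nat \<Rightarrow> (real \<times> (nat \<times> bool)) stream measure" where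
  "ssep_space N = stream_space (step_measure N)"

primrec conf_after :: "nat \<Rightarrow> (nat \<Rightarrow> bool) \<Rightarrow> (real \<times> (nat \<times> bool)) stream \<Rightarrow> nat \<Rightarrow> (nat \<Rightarrow> bool)" where
  "conf_after N \<eta>0 \<omega> 0 = \<eta>0"
| "conf_after N \<eta>0 \<omega> (Suc k) = step_conf N (snd (\<omega> !! k)) (conf_after N \<eta>0 \<omega> k)"

definition njumps :: "(real \<times> (nat \<times> bool)) stream \<Rightarrow> real \<Rightarrow> nat" where
  "njumps \<omega> t = card {n. 1 \<le> n \<and> (\<Sum>i<n. fst (\<omega> !! i)) \<le> t}"

definition eta_t :: "nat \<Rightarrow> (nat \<Rightarrow> bool) \<Rightarrow> (real \<times> (nat \<times> bool)) stream \<Rightarrow> real \<Rightarrow> (nat \<Rightarrow> bool)" where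
  "eta_t N \<eta>0 \<omega> t = conf_after N \<eta>0 \<omega> (njumps \<omega> t)"

definition pairing :: "nat \<Rightarrow> (nat \<Rightarrow> bool) \<Rightarrow> (real \<Rightarrow> real) \<Rightarrow> real" where
  "pairing N \<eta> H = (1 / real N) * (\<Sum>x<N. (if \<eta> x then 1 else 0) * H (real x / real N))"

definition not_in_C :: "real \<Rightarrow> (real \<Rightarrow> real) \<Rightarrow> real \<Rightarrow> real \<Rightarrow> (real \<Rightarrow> real) \<Rightarrow> bool" where
  "not_in_C T H \<delta> \<epsilon> F \<longleftrightarrow>
     (\<exists>s\<in>{0..T}. \<exists>t\<in>{s..min (s + \<delta>) T}. \<bar>F t - F s\<bar> > \<epsilon>)"

definition Q_notC :: "nat \<Rightarrow> real \<Rightarrow> (nat \<Rightarrow> bool) \<Rightarrow> (real \<Rightarrow> real) \<Rightarrow> real \<Rightarrow> real \<Rightarrow> real" where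
  "Q_notC N T \<eta>0 H \<delta> \<epsilon> =
     measure (ssep_space N)
       {\<omega> \<in> space (ssep_space N). not_in_C T H \<delta> \<epsilon> (\<lambda>t. pairing N (eta_t N \<eta>0 \<omega> t) H)}"

definition scaled_log :: "nat \<Rightarrow> real \<Rightarrow> ereal" where
  "scaled_log N p = (if p = 0 then - \<infinity> else ereal (ln p / real N))"

text \<open>C^2 functions on the continuous torus [0,1): 1-periodic C^2 functions on R.\<close>
definition C2_torus :: "(real \<Rightarrow> real) \<Rightarrow> bool" where
  "C2_torus H \<longleftrightarrow> (\<forall>x. H (x + 1) = H x) \<and>
     (\<exists>H' H''. (\<forall>x. (H has_real_derivative H' x) (at x)) \<and>
               (\<forall>x. (H' has_real_derivative H'' x) (at x)) \<and> continuous_on UNIV H'')"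

end

theory Submission
  imports Defs
begin


lemma prob_exp: "0 < N \<Longrightarrow> prob_space (density lborel (exponential_density (real N ^ 3)))"
  by (rule prob_space_exponential_density) simp

lemma prob_step: assumes "0 < N" shows "prob_space (step_measure N)"
proof -
  interpret E: prob_space "density lborel (exponential_density (real N ^ 3))" using prob_exp[OF assms] .
  interpret P: prob_space "measure_pmf (step_pmf N)" by (rule prob_space_measure_pmf)
  interpret pair_prob_space "density lborel (exponential_density (real N ^ 3))" "measure_pmf (step_pmf N)" ..
  show ?thesis unfolding step_measure_def by (rule prob_space_axioms)
qed

lemma prob_S: assumes "0 < N" shows "prob_space (ssep_space N)"
proof -
  interpret prob_space "step_measure N" using prob_step[OF assms] .
  show ?thesis unfolding ssep_space_def by (rule prob_space_stream_space)
qed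

lemma peel:
  assumes "0 < N" "f \<in> borel_measurable (ssep_space N)"
  shows "(\<integral>\<^sup>+X. f X \<partial>ssep_space N) = (\<integral>\<^sup>+x. (\<integral>\<^sup>+X. f (x ## X) \<partial>ssep_space N) \<partial>step_measure N)"
proof -
  interpret prob_space "step_measure N" using prob_step[OF assms(1)] .
  show ?thesis using nn_integral_stream_space[of f] assms(2) unfolding ssep_space_def by simp
qed

lemma meas_pmf: "g \<in> borel_measurable (measure_pmf p)"
  by (simp add: measurable_cong_sets[OF sets_measure_pmf_count_space refl])

lemma int_snd:
  assumes "0 < N"
  shows "(\<integral>\<^sup>+x. g (snd x) \<partial>step_measure N) = (\<integral>\<^sup>+y. g y \<partial>measure_pmf (step_pmf N))"
proof -
  interpret E: prob_space "density lborel (exponential_density (real N ^ 3))" using prob_exp[OF assms] .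
  interpret P: prob_space "measure_pmf (step_pmf N)" by (rule prob_space_measure_pmf)
  interpret P': sigma_finite_measure "measure_pmf (step_pmf N)" by (rule prob_space_imp_sigma_finite[OF prob_space_measure_pmf])
  have m: "(\<lambda>x. g (snd x)) \<in> borel_measurable (density lborel (exponential_density (real N ^ 3)) \<Otimes>\<^sub>M measure_pmf (step_pmf N))"
    by (rule measurable_compose[OF measurable_snd meas_pmf])
  have "(\<integral>\<^sup>+x. g (snd x) \<partial>step_measure N) = (\<integral>\<^sup>+x. (\<integral>\<^sup>+y. g y \<partial>measure_pmf (step_pmf N)) \<partial>density lborel (exponential_density (real N ^ 3)))"
    unfolding step_measure_def using sigma_finite_measure.nn_integral_fst[OF prob_space_imp_sigma_finite[OF prob_space_measure_pmf] m] by simp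
  also have "\<dots> = (\<integral>\<^sup>+y. g y \<partial>measure_pmf (step_pmf N))"
    using E.emeasure_space_1 by simp
  finally show ?thesis .
qed

lemma int_fst:
  assumes "0 < N" "g \<in> borel_measurable borel"
  shows "(\<integral>\<^sup>+x. g (fst x) \<partial>step_measure N) = (\<integral>\<^sup>+t. g t \<partial>density lborel (exponential_density (real N ^ 3)))"
proof -
  interpret E: prob_space "density lborel (exponential_density (real N ^ 3))" using prob_exp[OF assms(1)] .
  interpret P: prob_space "measure_pmf (step_pmf N)" by (rule prob_space_measure_pmf)
  interpret P': sigma_finite_measure "measure_pmf (step_pmf N)" by (rule prob_space_imp_sigma_finite[OF prob_space_measure_pmf])
  have m: "(\<lambda>x. g (fst x)) \<in> borel_measurable (density lborel (exponential_density (real N ^ 3)) \<Otimes>\<^sub>M measure_pmf (step_pmf N))"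
    using assms(2) by measurable
  have "(\<integral>\<^sup>+x. g (fst x) \<partial>step_measure N) = (\<integral>\<^sup>+x. (\<integral>\<^sup>+y. g x \<partial>measure_pmf (step_pmf N)) \<partial>density lborel (exponential_density (real N ^ 3)))"
    unfolding step_measure_def using sigma_finite_measure.nn_integral_fst[OF prob_space_imp_sigma_finite[OF prob_space_measure_pmf] m] by simp
  also have "\<dots> = (\<integral>\<^sup>+t. g t \<partial>density lborel (exponential_density (real N ^ 3)))"
    using measure_pmf.emeasure_space_1 by simp
  finally show ?thesis .
qed

lemma exp_mgf:
  assumes r: "0 < r"
  shows "(\<integral>\<^sup>+t. ennreal (exp (- r * t)) \<partial>density lborel (exponential_density r)) = 1/2"
proof -
  have "(\<integral>\<^sup>+t. ennreal (exp (- r * t)) \<partial>density lborel (exponential_density r))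
      = (\<integral>\<^sup>+t. ennreal (exponential_density r t) * ennreal (exp (- r * t)) \<partial>lborel)"
    by (subst nn_integral_density) auto
  also have "\<dots> = (\<integral>\<^sup>+t. ennreal (1/2) * ennreal (exponential_density (2*r) t) \<partial>lborel)"
  proof (intro nn_integral_cong)
    fix t :: real
    have e: "exponential_density r t * exp (- r * t) = 1/2 * exponential_density (2*r) t"
      by (simp add: exponential_density_def algebra_simps flip: exp_add)
    have "ennreal (exponential_density r t) * ennreal (exp (- r * t)) = ennreal (exponential_density r t * exp (- r * t))"
      using r by (simp add: ennreal_mult exponential_density_nonneg)
    also have "\<dots> = ennreal (1/2 * exponential_density (2*r) t)" by (simp only: e)
    also have "\<dots> = ennreal (1/2) * ennreal (exponential_density (2*r) t)"
      by (rule ennreal_mult) (use r in \<open>auto simp: exponential_density_nonneg\<close>)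
    finally show "ennreal (exponential_density r t) * ennreal (exp (- r * t)) = ennreal (1/2) * ennreal (exponential_density (2*r) t)" .
  qed
  also have "\<dots> = ennreal (1/2) * (\<integral>\<^sup>+t. ennreal (exponential_density (2*r) t) \<partial>lborel)"
    by (rule nn_integral_cmult) simp
  also have "(\<integral>\<^sup>+t. ennreal (exponential_density (2*r) t) \<partial>lborel) = 1"
  proof -
    interpret prob_space "density lborel (exponential_density (2*r))"
      using prob_space_exponential_density[of "2*r"] r by simp
    have "emeasure (density lborel (exponential_density (2*r))) UNIV = 1"
      using emeasure_space_1 by simp
    then show ?thesis by (simp add: emeasure_density)
  qed
  finally show ?thesis by (simp add: ennreal_1 divide_ennreal_def ennreal_inverse_positive) 
qed

lemma exp_neg0:
  assumes r: "0 < r"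
  shows "(\<integral>\<^sup>+t. indicator {t. t < 0} t \<partial>density lborel (exponential_density r)) = 0"
proof -
  have "(\<integral>\<^sup>+t. indicator {t. t < 0} t \<partial>density lborel (exponential_density r))
     = (\<integral>\<^sup>+t. ennreal (exponential_density r t) * indicator {t. t < 0} t \<partial>lborel)"
    by (subst nn_integral_density) (auto simp del: nn_integral_indicator)
  also have "(\<lambda>t. ennreal (exponential_density r t) * indicator {t. t < 0} t) = (\<lambda>_. 0)"
    by (auto simp: fun_eq_iff exponential_density_def indicator_def)
  finally show ?thesis by simp
qed

lemma meas_snd_snth: "(\<lambda>\<omega>. snd (\<omega> !! i)) \<in> measurable (ssep_space N) (count_space UNIV)"
proof -
  have "(\<lambda>\<omega>. snd (\<omega> !! i)) \<in> measurable (ssep_space N) (measure_pmf (step_pmf N))"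
    unfolding ssep_space_def step_measure_def by measurable
  then show ?thesis by (simp add: measurable_cong_sets[OF refl sets_measure_pmf_count_space])
qed

definition hist :: "nat \<Rightarrow> (real \<times> (nat \<times> bool)) stream \<Rightarrow> (nat \<times> bool) list" where
  "hist i \<omega> = map (\<lambda>l. snd (\<omega> !! l)) [0..<i]"

definition cfl :: "nat \<Rightarrow> (nat \<Rightarrow> bool) \<Rightarrow> (nat \<times> bool) list \<Rightarrow> (nat \<Rightarrow> bool)" where
  "cfl N \<eta> l = foldl (\<lambda>\<eta> xc. step_conf N xc \<eta>) \<eta> l"

lemma conf_cfl: "conf_after N \<eta> \<omega> i = cfl N \<eta> (hist i \<omega>)"
  by (induction i) (auto simp: hist_def cfl_def)

lemma meas_hist: "hist i \<in> measurable (ssep_space N) (count_space UNIV)"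
proof (induction i)
  case 0 then show ?case by (simp add: hist_def)
next
  case (Suc i)
  have eq: "hist (Suc i) = (\<lambda>\<omega>. (\<lambda>l \<omega>. l @ [snd (\<omega> !! i)]) (hist i \<omega>) \<omega>)"
    by (auto simp: hist_def fun_eq_iff)
  show ?case unfolding eq
  proof (rule measurable_compose_countable[OF _ Suc])
    fix l :: "(nat \<times> bool) list"
    show "(\<lambda>\<omega>. l @ [snd (\<omega> !! i)]) \<in> measurable (ssep_space N) (count_space UNIV)"
      by (rule measurable_compose[OF meas_snd_snth]) simp
  qed
qed

lemma meas_conf_G:
  assumes "\<And>\<eta>. G \<eta> \<in> borel_measurable (ssep_space N)"
  shows "(\<lambda>\<omega>. G (conf_after N \<eta>0 \<omega> i) (sdrop i \<omega>)) \<in> borel_measurable (ssep_space N)"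
proof -
  have "(\<lambda>\<omega>. (\<lambda>l \<omega>. G (cfl N \<eta>0 l) (sdrop i \<omega>)) (hist i \<omega>) \<omega>) \<in> borel_measurable (ssep_space N)"
  proof (rule measurable_compose_countable[OF _ meas_hist])
    fix l
    show "(\<lambda>\<omega>. G (cfl N \<eta>0 l) (sdrop i \<omega>)) \<in> borel_measurable (ssep_space N)"
      by (rule measurable_compose[OF _ assms]) (simp add: ssep_space_def)
  qed
  then show ?thesis by (simp add: conf_cfl)
qed

lemma meas_conf_F:
  "(\<lambda>\<omega>. F (conf_after N \<eta>0 \<omega> i)) \<in> borel_measurable (ssep_space N)"
  using meas_conf_G[of "\<lambda>\<eta> \<omega>. F \<eta>" N \<eta>0 i] by simp

lemma conf_Suc_shift:
  "conf_after N \<eta> \<omega> (Suc n) = conf_after N (step_conf N (snd (shd \<omega>)) \<eta>) (stl \<omega>) n"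
  by (induction n) auto

lemma conf_Cons:
  "conf_after N \<eta> (x ## \<omega>) (Suc n) = conf_after N (step_conf N (snd x) \<eta>) \<omega> n"
  by (simp only: conf_Suc_shift) simp

lemma shift_bound:
  assumes N: "0 < N" and meas: "\<And>\<eta>. G \<eta> \<in> borel_measurable (ssep_space N)"
    and b: "\<And>\<eta>. (\<integral>\<^sup>+\<omega>. G \<eta> \<omega> \<partial>ssep_space N) \<le> b"
  shows "(\<integral>\<^sup>+\<omega>. G (conf_after N \<eta>0 \<omega> i) (sdrop i \<omega>) \<partial>ssep_space N) \<le> b"
proof (induction i arbitrary: \<eta>0)
  case 0 then show ?case using b by simp
next
  case (Suc i)
  interpret P: prob_space "step_measure N" using prob_step[OF N] .
  have "(\<integral>\<^sup>+\<omega>. G (conf_after N \<eta>0 \<omega> (Suc i)) (sdrop (Suc i) \<omega>) \<partial>ssep_space N)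
     = (\<integral>\<^sup>+x. (\<integral>\<^sup>+\<omega>. G (conf_after N (step_conf N (snd x) \<eta>0) \<omega> i) (sdrop i \<omega>) \<partial>ssep_space N) \<partial>step_measure N)"
    by (subst peel[OF N meas_conf_G[OF meas]]) (simp only: conf_Cons sdrop.simps stream.sel)
  also have "\<dots> \<le> (\<integral>\<^sup>+x. b \<partial>step_measure N)"
    by (intro nn_integral_mono Suc)
  also have "\<dots> = b" using P.emeasure_space_1 by simp
  finally show ?case .
qed


definition ind :: "bool \<Rightarrow> real" where "ind b = (if b then 1 else 0)"

lemma pairing_ind: "pairing N \<eta> H = (1 / real N) * (\<Sum>z<N. ind (\<eta> z) * H (real z / real N))"
  by (simp add: pairing_def ind_def)

lemma H_wrap:
  assumes per: "\<And>y. H (y + 1) = H y" and x: "x < N"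
  shows "H (real ((x + 1) mod N) / real N) = H (real (x + 1) / real N)"
proof (cases "x + 1 = N")
  case True
  then have "(x + 1) mod N = 0" by simp
  moreover have "real (x+1) / real N = 0 + 1" using True x by simp
  ultimately show ?thesis using per[of 0] by simp
next
  case False
  then show ?thesis using x by simp
qed

lemma swap_pairing:
  assumes N: "2 \<le> N" and x: "x < N" and per: "\<And>y. H (y + 1) = H y"
  shows "pairing N (swap_conf N x \<eta>) H - pairing N \<eta> H
    = (1 / real N) * (ind (\<eta> x) - ind (\<eta> ((x+1) mod N))) * (H (real (x+1) / real N) - H (real x / real N))"
proof -
  define x' where "x' = (x + 1) mod N"
  have x': "x' < N" "x' \<noteq> x" using N x unfolding x'_def
    by (auto simp: mod_Suc)  (metis Suc_lessI mod_Suc mod_less n_not_Suc_n)?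
  have sw: "swap_conf N x \<eta> z = (if z = x then \<eta> x' else if z = x' then \<eta> x else \<eta> z)" for z
    unfolding swap_conf_def x'_def by auto
  define f where "f z = ind (swap_conf N x \<eta> z) * H (real z / real N) - ind (\<eta> z) * H (real z / real N)" for z
  have "(\<Sum>z<N. ind (swap_conf N x \<eta> z) * H (real z / real N)) - (\<Sum>z<N. ind (\<eta> z) * H (real z / real N))
      = (\<Sum>z<N. f z)" by (simp add: f_def sum_subtractf)
  also have "\<dots> = (\<Sum>z\<in>{x, x'}. f z)"
    by (rule sum.mono_neutral_right) (use x x' in \<open>auto simp: f_def sw\<close>)
  also have "\<dots> = f x + f x'" using x' by simp
  also have "\<dots> = (ind (\<eta> x) - ind (\<eta> x')) * (H (real x' / real N) - H (real x / real N))"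
    using x' by (simp add: f_def sw algebra_simps)
  finally have "(\<Sum>z<N. ind (swap_conf N x \<eta> z) * H (real z / real N)) - (\<Sum>z<N. ind (\<eta> z) * H (real z / real N))
      = (ind (\<eta> x) - ind (\<eta> x')) * (H (real x' / real N) - H (real x / real N))" .
  moreover have "H (real x' / real N) = H (real (x+1) / real N)"
    unfolding x'_def by (rule H_wrap[of H, OF per x])
  ultimately show ?thesis unfolding pairing_ind x'_def by (simp add: diff_divide_distrib[symmetric])
qed


definition Dsw :: "nat \<Rightarrow> (real \<Rightarrow> real) \<Rightarrow> (nat \<Rightarrow> bool) \<Rightarrow> nat \<Rightarrow> real" where
  "Dsw N H \<eta> x = (1 / real N) * (ind (\<eta> x) - ind (\<eta> ((x+1) mod N))) * (H (real (x+1) / real N) - H (real x / real N))"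

definition Dst :: "nat \<Rightarrow> (real \<Rightarrow> real) \<Rightarrow> (nat \<Rightarrow> bool) \<Rightarrow> nat \<times> bool \<Rightarrow> real" where
  "Dst N H \<eta> xc = pairing N (step_conf N xc \<eta>) H - pairing N \<eta> H"

definition dr :: "nat \<Rightarrow> (real \<Rightarrow> real) \<Rightarrow> (nat \<Rightarrow> bool) \<Rightarrow> real" where
  "dr N H \<eta> = measure_pmf.expectation (step_pmf N) (Dst N H \<eta>)"

lemma Dst_eq:
  assumes N: "2 \<le> N" and x: "x < N" and per: "\<And>y. H (y + 1) = H y"
  shows "Dst N H \<eta> (x, c) = (if x \<noteq> N - 1 \<or> c then Dsw N H \<eta> x else 0)"
  using swap_pairing[where H=H, OF N x per] by (simp add: Dst_def step_conf_def Dsw_def)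

lemma ind_bounds: "0 \<le> ind b" "ind b \<le> 1" "\<bar>ind a - ind b\<bar> \<le> 1"
  by (auto simp: ind_def)

lemma Dsw_bound:
  assumes N: "2 \<le> N" and x: "x < N" and A: "0 \<le> A"
    and Lip: "\<And>u v. u \<in> {-1..2} \<Longrightarrow> v \<in> {-1..2} \<Longrightarrow> \<bar>H v - H u\<bar> \<le> A * \<bar>v - u\<bar>"
  shows "\<bar>Dsw N H \<eta> x\<bar> \<le> A / real N ^ 2"
proof -
  have Np: "real N > 0" using N by simp
  have u: "real x / real N \<in> {-1..2}" "real (x+1) / real N \<in> {-1..2}"
    using x Np by (auto simp: field_simps)
  have "\<bar>H (real (x+1) / real N) - H (real x / real N)\<bar> \<le> A * \<bar>real (x+1) / real N - real x / real N\<bar>"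
    by (rule Lip) (use u in auto)
  also have "\<dots> = A / real N" using Np by (simp add: field_simps)
  finally have g: "\<bar>H (real (x+1) / real N) - H (real x / real N)\<bar> \<le> A / real N" .
  have "\<bar>Dsw N H \<eta> x\<bar> = (1 / real N) * (\<bar>ind (\<eta> x) - ind (\<eta> ((x+1) mod N))\<bar> * \<bar>H (real (x+1) / real N) - H (real x / real N)\<bar>)"
    using Np by (simp add: Dsw_def abs_mult)
  also have "\<dots> \<le> (1 / real N) * (1 * (A / real N))"
    using Np g ind_bounds(3) by (intro mult_left_mono mult_mono) auto
  finally show ?thesis by (simp add: power2_eq_square)
qed

lemma Dst_bound:
  assumes N: "2 \<le> N" and x: "x < N" and A: "0 \<le> A" and per: "\<And>y. H (y + 1) = H y"
    and Lip: "\<And>u v. u \<in> {-1..2} \<Longrightarrow> v \<in> {-1..2} \<Longrightarrow> \<bar>H v - H u\<bar> \<le> A * \<bar>v - u\<bar>"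
  shows "\<bar>Dst N H \<eta> (x, c)\<bar> \<le> A / real N ^ 2"
  using Dsw_bound[OF N x A Lip, of \<eta>] A by (simp add: Dst_eq[where H=H, OF N x per])

lemma sbp:
  fixes E g :: "nat \<Rightarrow> real"
  assumes "E N = E 0" "g N = g 0"
  shows "(\<Sum>x<N. (E x - E (Suc x)) * g x) = (\<Sum>x<N. E (Suc x) * (g (Suc x) - g x))"
proof -
  have "(\<Sum>x<N. E x * g x) = (\<Sum>x<N. E (Suc x) * g (Suc x))"
  proof -
    have "(\<Sum>x<Suc N. E x * g x) = E 0 * g 0 + (\<Sum>x<N. E (Suc x) * g (Suc x))"
      by (rule sum.lessThan_Suc_shift)
    moreover have "(\<Sum>x<Suc N. E x * g x) = (\<Sum>x<N. E x * g x) + E N * g N" by simp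
    ultimately show ?thesis using assms by simp
  qed
  then show ?thesis by (simp add: algebra_simps sum_subtractf)
qed

lemma dr_eq:
  assumes N: "2 \<le> N" and per: "\<And>y. H (y + 1) = H y"
  shows "dr N H \<eta> = (1 / real N) * (\<Sum>x<N. Dsw N H \<eta> x) - (1 / real N) * (1 - 1 / real N) * Dsw N H \<eta> (N - 1)"
proof -
  have Np: "real N > 0" "1 / real N \<le> 1" using N by auto
  have "dr N H \<eta> = (\<Sum>a\<in>{..<N} \<times> UNIV. Dst N H \<eta> a * pmf (step_pmf N) a)"
    unfolding dr_def by (rule integral_measure_pmf_real) (use N in \<open>auto simp: step_pmf_def lessThan_empty_iff\<close>)
  also have "\<dots> = (\<Sum>x<N. \<Sum>c\<in>UNIV. Dst N H \<eta> (x, c) * pmf (step_pmf N) (x, c))"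
    by (simp add: sum.cartesian_product)
  also have "\<dots> = (\<Sum>x<N. (1 / real N) * ((1 / real N) * Dsw N H \<eta> x + (1 - 1 / real N) * (if x \<noteq> N - 1 then Dsw N H \<eta> x else 0)))"
  proof (rule sum.cong[OF refl])
    fix x assume x: "x \<in> {..<N}"
    then have x: "x < N" by simp
    have pm: "pmf (pmf_of_set {..<N}) x = 1 / real N" "pmf (pmf_of_set {..<N}) (N - 1) = 1 / real N"
        using x N by (auto simp: lessThan_empty_iff)
    show "(\<Sum>c\<in>UNIV. Dst N H \<eta> (x, c) * pmf (step_pmf N) (x, c)) = (1 / real N) * ((1 / real N) * Dsw N H \<eta> x + (1 - 1 / real N) * (if x \<noteq> N - 1 then Dsw N H \<eta> x else 0))"
      using Np x pm by (simp add: UNIV_bool step_pmf_def pmf_pair Dst_eq[where H=H, OF N x per] field_simps)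
  qed
  also have "\<dots> = (1 / real N) * ((1 / real N) * (\<Sum>x<N. Dsw N H \<eta> x) + (1 - 1 / real N) * (\<Sum>x<N. if x \<noteq> N - 1 then Dsw N H \<eta> x else 0))"
    by (simp only: sum_distrib_left sum.distrib ring_distribs)
  also have "(\<Sum>x<N. if x \<noteq> N - 1 then Dsw N H \<eta> x else 0) = (\<Sum>x<N. Dsw N H \<eta> x) - Dsw N H \<eta> (N - 1)"
  proof -
    have "(\<Sum>x<N. Dsw N H \<eta> x) = Dsw N H \<eta> (N - 1) + (\<Sum>x\<in>{..<N} - {N-1}. Dsw N H \<eta> x)"
      by (rule sum.remove) (use N in auto)
    moreover have "(\<Sum>x<N. if x \<noteq> N - 1 then Dsw N H \<eta> x else 0) = (\<Sum>x\<in>{..<N} - {N-1}. Dsw N H \<eta> x)"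
      by (simp add: sum.If_cases) (rule sum.cong, auto)
    ultimately show ?thesis by simp
  qed
  finally show ?thesis by (simp add: algebra_simps)
qed

lemma dr_bound:
  assumes N: "2 \<le> N" and per: "\<And>y. H (y + 1) = H y" and A: "0 \<le> A" and B: "0 \<le> B"
    and Lip: "\<And>u v. u \<in> {-1..2} \<Longrightarrow> v \<in> {-1..2} \<Longrightarrow> \<bar>H v - H u\<bar> \<le> A * \<bar>v - u\<bar>"
    and SD: "\<And>u h. u \<in> {0..1} \<Longrightarrow> h \<in> {0..1} \<Longrightarrow> \<bar>H (u + h) - 2 * H u + H (u - h)\<bar> \<le> B * h\<^sup>2"
  shows "\<bar>dr N H \<eta>\<bar> \<le> (A + B) / real N ^ 3"
proof -
  have Np: "real N > 0" "real N \<ge> 1" using N by auto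
  define E where "E y = ind (\<eta> (y mod N))" for y
  define g where "g x = H (real (x+1) / real N) - H (real x / real N)" for x
  have sumD: "(\<Sum>x<N. Dsw N H \<eta> x) = (1 / real N) * (\<Sum>x<N. (E x - E (Suc x)) * g x)"
    by (simp add: sum_distrib_left Dsw_def E_def g_def)
  have gN: "g N = g 0"
  proof -
    have "H (real (N+1) / real N) = H (1 / real N + 1)" using Np by (simp add: field_simps)
    also have "\<dots> = H (1 / real N)" by (rule per)
    finally show ?thesis using per[of 0] Np by (simp add: g_def)
  qed
  have "(\<Sum>x<N. (E x - E (Suc x)) * g x) = (\<Sum>x<N. E (Suc x) * (g (Suc x) - g x))"
    by (rule sbp) (simp_all add: E_def gN)
  also have "\<bar>\<dots>\<bar> \<le> (\<Sum>x<N. B / real N ^ 2)"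
  proof (rule order_trans[OF sum_abs], rule sum_mono)
    fix x assume "x \<in> {..<N}"
    then have x: "x < N" by simp
    have u: "real (x+1) / real N \<in> {0..1}" "1 / real N \<in> {0..1}" using x Np by (auto simp: field_simps)
    have "g (Suc x) - g x = H (real (x+1) / real N + 1 / real N) - 2 * H (real (x+1) / real N) + H (real (x+1) / real N - 1 / real N)"
      using Np by (simp add: g_def add_divide_distrib diff_divide_distrib)
    also have "\<bar>\<dots>\<bar> \<le> B * (1 / real N)\<^sup>2" by (rule SD[OF u])
    finally have "\<bar>g (Suc x) - g x\<bar> \<le> B / real N ^ 2" by (simp add: power_divide)
    moreover have "\<bar>E (Suc x)\<bar> \<le> 1" using ind_bounds by (simp add: E_def abs_le_iff)
    ultimately show "\<bar>E (Suc x) * (g (Suc x) - g x)\<bar> \<le> B / real N ^ 2"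
      by (simp add: abs_mult) (metis abs_ge_zero mult_le_one mult_left_le_one_le order_trans mult_mono mult_1 mult.commute)
  qed
  also have "\<dots> = B / real N" using Np by (simp add: power2_eq_square)
  finally have S: "\<bar>\<Sum>x<N. Dsw N H \<eta> x\<bar> \<le> (1 / real N) * (B / real N)"
    unfolding sumD using Np by (simp add: abs_mult) (metis divide_right_mono of_nat_0_le_iff divide_divide_eq_left)
  have D1: "\<bar>Dsw N H \<eta> (N - 1)\<bar> \<le> A / real N ^ 2" by (rule Dsw_bound[OF N _ A Lip]) (use N in auto)
  have "\<bar>dr N H \<eta>\<bar> \<le> (1 / real N) * \<bar>\<Sum>x<N. Dsw N H \<eta> x\<bar> + (1 / real N) * (1 - 1 / real N) * \<bar>Dsw N H \<eta> (N - 1)\<bar>"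
    unfolding dr_eq[where H=H, OF N per]
  proof (rule order_trans[OF abs_triangle_ineq4])
    have c: "0 \<le> 1 - 1 / real N" using Np by simp
    show "\<bar>1 / real N * sum (Dsw N H \<eta>) {..<N}\<bar> + \<bar>1 / real N * (1 - 1 / real N) * Dsw N H \<eta> (N - 1)\<bar>
      \<le> 1 / real N * \<bar>sum (Dsw N H \<eta>) {..<N}\<bar> + 1 / real N * (1 - 1 / real N) * \<bar>Dsw N H \<eta> (N - 1)\<bar>"
      using Np c by (simp add: abs_mult)
  qed
  also have "\<dots> \<le> (1 / real N) * ((1 / real N) * (B / real N)) + (1 / real N) * 1 * (A / real N ^ 2)"
    using Np S D1 by (intro add_mono mult_left_mono mult_mono) auto
  also have "\<dots> = (A + B) / real N ^ 3" by (simp add: field_simps power3_eq_cube power2_eq_square add_divide_distrib)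
  finally show ?thesis .
qed


definition Mp :: "nat \<Rightarrow> (real \<Rightarrow> real) \<Rightarrow> (nat \<Rightarrow> bool) \<Rightarrow> (real \<times> (nat \<times> bool)) stream \<Rightarrow> nat \<Rightarrow> real" where
  "Mp N H \<eta> \<omega> n = pairing N (conf_after N \<eta> \<omega> n) H - pairing N \<eta> H - (\<Sum>l<n. dr N H (conf_after N \<eta> \<omega> l))"

lemma Mp_0[simp]: "Mp N H \<eta> \<omega> 0 = 0" by (simp add: Mp_def)

lemma Mp_Cons:
  "Mp N H \<eta> (x ## \<omega>) (Suc n) = (Dst N H \<eta> (snd x) - dr N H \<eta>) + Mp N H (step_conf N (snd x) \<eta>) \<omega> n"
proof -
  have c: "conf_after N \<eta> (x ## \<omega>) (Suc l) = conf_after N (step_conf N (snd x) \<eta>) \<omega> l" for l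
    by (rule conf_Cons)
  have "(\<Sum>l<Suc n. dr N H (conf_after N \<eta> (x ## \<omega>) l)) = dr N H (conf_after N \<eta> (x ## \<omega>) 0) + (\<Sum>l<n. dr N H (conf_after N \<eta> (x ## \<omega>) (Suc l)))"
    by (rule sum.lessThan_Suc_shift)
  also have "\<dots> = dr N H \<eta> + (\<Sum>l<n. dr N H (conf_after N (step_conf N (snd x) \<eta>) \<omega> l))"
    by (simp only: c conf_after.simps(1))
  finally have s: "(\<Sum>l<Suc n. dr N H (conf_after N \<eta> (x ## \<omega>) l)) = dr N H \<eta> + (\<Sum>l<n. dr N H (conf_after N (step_conf N (snd x) \<eta>) \<omega> l))" .
  show ?thesis unfolding Mp_def Dst_def s c by simp
qed

lemma meas_Mp: "(\<lambda>\<omega>. Mp N H \<eta> \<omega> n) \<in> borel_measurable (ssep_space N)"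
  unfolding Mp_def
  by (intro borel_measurable_diff borel_measurable_sum meas_conf_F borel_measurable_const)

lemma hoeff1:
  assumes N: "2 \<le> N" and A: "0 \<le> A" and per: "\<And>y. H (y + 1) = H y"
    and Lip: "\<And>u v. u \<in> {-1..2} \<Longrightarrow> v \<in> {-1..2} \<Longrightarrow> \<bar>H v - H u\<bar> \<le> A * \<bar>v - u\<bar>"
  shows "(\<integral>\<^sup>+y. ennreal (exp (lam * (Dst N H \<eta> y - dr N H \<eta>))) \<partial>measure_pmf (step_pmf N))
     \<le> ennreal (exp (lam\<^sup>2 * (A / real N ^ 2)\<^sup>2 / 2))"
proof -
  define c where "c = A / real N ^ 2"
  have AE: "AE y in measure_pmf (step_pmf N). Dst N H \<eta> y \<in> {-c..c}"
    unfolding AE_measure_pmf_iff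
  proof
    fix y assume "y \<in> set_pmf (step_pmf N)"
    then have "fst y < N" using N by (auto simp: step_pmf_def lessThan_empty_iff)
    then have "\<bar>Dst N H \<eta> (fst y, snd y)\<bar> \<le> c"
      unfolding c_def by (rule Dst_bound[OF N _ A per Lip])
    then show "Dst N H \<eta> y \<in> {-c..c}" by auto
  qed
  consider "lam > 0" | "lam = 0" | "lam < 0" by linarith
  then show ?thesis
  proof cases
    case 1
    interpret interval_bounded_random_variable "measure_pmf (step_pmf N)" "Dst N H \<eta>" "-c" c
      by unfold_locales (auto simp: meas_pmf intro!: eventually_mono[OF AE])
    have "(\<integral>\<^sup>+y. ennreal (exp (lam * (Dst N H \<eta> y - dr N H \<eta>))) \<partial>measure_pmf (step_pmf N))
        \<le> ennreal (exp (lam\<^sup>2 * (c - - c)\<^sup>2 / 8))"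
      using Hoeffdings_lemma_nn_integral[OF 1] unfolding dr_def by simp
    also have "lam\<^sup>2 * (c - - c)\<^sup>2 / 8 = lam\<^sup>2 * (A / real N ^ 2)\<^sup>2 / 2" by (simp add: c_def power2_eq_square field_simps)
    finally show ?thesis .
  next
    case 2
    then show ?thesis by (simp add: measure_pmf.emeasure_space_1)
  next
    case 3
    interpret interval_bounded_random_variable "measure_pmf (step_pmf N)" "\<lambda>y. - Dst N H \<eta> y" "-c" c
      by unfold_locales (auto simp: meas_pmf intro!: eventually_mono[OF AE])
    have l: "- lam > 0" using 3 by simp
    have "(\<integral>\<^sup>+y. ennreal (exp (- lam * (- Dst N H \<eta> y - measure_pmf.expectation (step_pmf N) (\<lambda>y. - Dst N H \<eta> y)))) \<partial>measure_pmf (step_pmf N))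
        \<le> ennreal (exp ((- lam)\<^sup>2 * (c - - c)\<^sup>2 / 8))"
      using Hoeffdings_lemma_nn_integral[OF l] by simp
    also have "measure_pmf.expectation (step_pmf N) (\<lambda>y. - Dst N H \<eta> y) = - dr N H \<eta>"
      unfolding dr_def by simp
    also have "(- lam)\<^sup>2 * (c - - c)\<^sup>2 / 8 = lam\<^sup>2 * (A / real N ^ 2)\<^sup>2 / 2" by (simp add: c_def power2_eq_square field_simps)
    also have "(\<lambda>y. ennreal (exp (- lam * (- Dst N H \<eta> y - - dr N H \<eta>)))) = (\<lambda>y. ennreal (exp (lam * (Dst N H \<eta> y - dr N H \<eta>))))"
      by (simp add: algebra_simps)
    finally show ?thesis .
  qed
qed

lemma EM:
  assumes N: "2 \<le> N" and A: "0 \<le> A" and per: "\<And>y. H (y + 1) = H y"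
    and Lip: "\<And>u v. u \<in> {-1..2} \<Longrightarrow> v \<in> {-1..2} \<Longrightarrow> \<bar>H v - H u\<bar> \<le> A * \<bar>v - u\<bar>"
  shows "(\<integral>\<^sup>+\<omega>. ennreal (exp (lam * Mp N H \<eta> \<omega> n)) \<partial>ssep_space N)
     \<le> ennreal (exp (real n * (lam\<^sup>2 * (A / real N ^ 2)\<^sup>2 / 2)))"
proof (induction n arbitrary: \<eta>)
  case 0
  interpret prob_space "ssep_space N" using prob_S N by simp
  show ?case using emeasure_space_1 by simp
next
  case (Suc n)
  define q where "q = lam\<^sup>2 * (A / real N ^ 2)\<^sup>2 / 2"
  have N0: "0 < N" using N by simp
  have mexp: "(\<lambda>\<omega>. ennreal (exp (lam * Mp N H \<eta>' \<omega> m))) \<in> borel_measurable (ssep_space N)" for \<eta>' m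
    using meas_Mp[of N H \<eta>' m] by measurable
  have "(\<integral>\<^sup>+\<omega>. ennreal (exp (lam * Mp N H \<eta> \<omega> (Suc n))) \<partial>ssep_space N)
      = (\<integral>\<^sup>+x. (\<integral>\<^sup>+\<omega>. ennreal (exp (lam * (Dst N H \<eta> (snd x) - dr N H \<eta>))) * ennreal (exp (lam * Mp N H (step_conf N (snd x) \<eta>) \<omega> n)) \<partial>ssep_space N) \<partial>step_measure N)"
    by (subst peel[OF N0 mexp]) (simp add: Mp_Cons distrib_left exp_add ennreal_mult)
  also have "\<dots> = (\<integral>\<^sup>+x. ennreal (exp (lam * (Dst N H \<eta> (snd x) - dr N H \<eta>))) * (\<integral>\<^sup>+\<omega>. ennreal (exp (lam * Mp N H (step_conf N (snd x) \<eta>) \<omega> n)) \<partial>ssep_space N) \<partial>step_measure N)"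
    by (intro nn_integral_cong nn_integral_cmult mexp)
  also have "\<dots> \<le> (\<integral>\<^sup>+x. ennreal (exp (lam * (Dst N H \<eta> (snd x) - dr N H \<eta>))) * ennreal (exp (real n * q)) \<partial>step_measure N)"
    by (intro nn_integral_mono mult_left_mono Suc[unfolded q_def[symmetric]]) simp
  also have "\<dots> = (\<integral>\<^sup>+y. ennreal (exp (lam * (Dst N H \<eta> y - dr N H \<eta>))) * ennreal (exp (real n * q)) \<partial>measure_pmf (step_pmf N))"
    by (rule int_snd[OF N0])
  also have "\<dots> = (\<integral>\<^sup>+y. ennreal (exp (lam * (Dst N H \<eta> y - dr N H \<eta>))) \<partial>measure_pmf (step_pmf N)) * ennreal (exp (real n * q))"
    by (rule nn_integral_multc) (simp add: meas_pmf)
  also have "\<dots> \<le> ennreal (exp q) * ennreal (exp (real n * q))"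
    using hoeff1[where H=H and lam=lam and \<eta>=\<eta>, OF N A per Lip]
    by (intro mult_right_mono) (simp_all add: q_def)
  also have "\<dots> = ennreal (exp (real (Suc n) * q))"
    by (simp add: ennreal_mult[symmetric] exp_add[symmetric] algebra_simps)
  finally show ?case unfolding q_def .
qed


lemma meas_fst_snth[measurable]: "(\<lambda>\<omega>. fst (\<omega> !! l)) \<in> borel_measurable (ssep_space N)"
  unfolding ssep_space_def step_measure_def by measurable

lemma tau_sum:
  assumes N0: "0 < N"
  shows "(\<integral>\<^sup>+\<omega>. ennreal (exp (- (real N ^ 3) * (\<Sum>l<L. fst (\<omega> !! l)))) \<partial>ssep_space N) \<le> ennreal ((1/2) ^ L)"
proof (induction L)
  case 0
  interpret prob_space "ssep_space N" using prob_S N0 by simp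
  show ?case using emeasure_space_1 by simp
next
  case (Suc L)
  define r where "r = real N ^ 3"
  have r: "0 < r" using N0 by (simp add: r_def)
  have m: "(\<lambda>\<omega>. ennreal (exp (- r * (\<Sum>l<K. fst (\<omega> !! l))))) \<in> borel_measurable (ssep_space N)" for K
    by measurable
  have "(\<integral>\<^sup>+\<omega>. ennreal (exp (- r * (\<Sum>l<Suc L. fst (\<omega> !! l)))) \<partial>ssep_space N)
     = (\<integral>\<^sup>+x. (\<integral>\<^sup>+\<omega>. ennreal (exp (- r * fst x)) * ennreal (exp (- r * (\<Sum>l<L. fst (\<omega> !! l)))) \<partial>ssep_space N) \<partial>step_measure N)"
    by (subst peel[OF N0 m]) (simp del: sum.lessThan_Suc add: sum.lessThan_Suc_shift algebra_simps flip: ennreal_mult exp_add)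
  also have "\<dots> = (\<integral>\<^sup>+x. ennreal (exp (- r * fst x)) * (\<integral>\<^sup>+\<omega>. ennreal (exp (- r * (\<Sum>l<L. fst (\<omega> !! l)))) \<partial>ssep_space N) \<partial>step_measure N)"
    by (intro nn_integral_cong nn_integral_cmult m)
  also have "\<dots> \<le> (\<integral>\<^sup>+x. ennreal (exp (- r * fst x)) * ennreal ((1/2) ^ L) \<partial>step_measure N)"
    by (intro nn_integral_mono mult_left_mono Suc[unfolded r_def[symmetric]]) simp
  also have "\<dots> = (\<integral>\<^sup>+t. ennreal (exp (- r * t)) * ennreal ((1/2) ^ L) \<partial>density lborel (exponential_density r))"
    unfolding r_def by (rule int_fst[OF N0]) measurable
  also have "\<dots> = (\<integral>\<^sup>+t. ennreal (exp (- r * t)) \<partial>density lborel (exponential_density r)) * ennreal ((1/2) ^ L)"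
    by (rule nn_integral_multc) measurable
  also have "\<dots> = ennreal (1/2) * ennreal ((1/2) ^ L)"
  proof -
    have h: "(1/2::ennreal) = ennreal (1/2)"
      using divide_ennreal[of 1 2] by simp
    show ?thesis by (simp only: exp_mgf[OF r] h)
  qed
  also have "\<dots> = ennreal ((1/2) ^ Suc L)"
    by (subst ennreal_mult[symmetric]) simp_all
  finally show ?case unfolding r_def .
qed

lemma tau_sum_shift:
  assumes N0: "0 < N"
  shows "(\<integral>\<^sup>+\<omega>. ennreal (exp (- (real N ^ 3) * (\<Sum>l<L. fst (\<omega> !! (i + l))))) \<partial>ssep_space N) \<le> ennreal ((1/2) ^ L)"
proof -
  have m: "(\<lambda>\<omega>. ennreal (exp (- (real N ^ 3) * (\<Sum>l<L. fst (\<omega> !! l))))) \<in> borel_measurable (ssep_space N)"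
    by measurable
  have "(\<integral>\<^sup>+\<omega>. (\<lambda>\<eta> \<omega>. ennreal (exp (- (real N ^ 3) * (\<Sum>l<L. fst (\<omega> !! l))))) (conf_after N (\<lambda>_. False) \<omega> i) (sdrop i \<omega>) \<partial>ssep_space N) \<le> ennreal ((1/2) ^ L)"
    by (rule shift_bound[OF N0 m tau_sum[OF N0]])
  then show ?thesis by (simp add: sdrop_snth)
qed

lemma neg_null:
  assumes N0: "0 < N"
  shows "(\<integral>\<^sup>+\<omega>. indicator {t. t < 0} (fst (\<omega> !! i)) \<partial>ssep_space N) = 0"
proof -
  have m: "(\<lambda>\<omega>. indicator {t::real. t < 0} (fst (\<omega> !! 0)) :: ennreal) \<in> borel_measurable (ssep_space N)"
    by measurable
  interpret prob_space "step_measure N" using prob_step[OF N0] .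
  have "(\<integral>\<^sup>+\<omega>. indicator {t::real. t < 0} (fst (\<omega> !! 0)) \<partial>ssep_space N)
      = (\<integral>\<^sup>+x. (\<integral>\<^sup>+\<omega>. indicator {t::real. t < 0} (fst x) \<partial>ssep_space N) \<partial>step_measure N)"
    by (subst peel[OF N0 m]) simp
  also have "\<dots> = (\<integral>\<^sup>+x. indicator {t::real. t < 0} (fst x) \<partial>step_measure N)"
  proof -
    interpret S: prob_space "ssep_space N" using prob_S[OF N0] .
    show ?thesis using S.emeasure_space_1 by (simp add: nn_integral_multc)
  qed
  also have "\<dots> = 0"
    using exp_neg0[of "real N ^ 3"] N0 by (subst int_fst[OF N0]) simp_all
  finally have "(\<integral>\<^sup>+\<omega>. indicator {t::real. t < 0} (fst (\<omega> !! 0)) \<partial>ssep_space N) = 0" .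
  then have "(\<integral>\<^sup>+\<omega>. (\<lambda>\<eta> \<omega>. indicator {t::real. t < 0} (fst (\<omega> !! 0)) :: ennreal) (conf_after N (\<lambda>_. False) \<omega> i) (sdrop i \<omega>) \<partial>ssep_space N) \<le> 0"
    by (intro shift_bound[OF N0 m]) simp
  then show ?thesis by (simp add: sdrop_snth)
qed


lemma lip_from_deriv:
  fixes f f' :: "real \<Rightarrow> real"
  assumes d: "\<And>x. (f has_real_derivative f' x) (at x)" and M: "\<And>x. x \<in> {-1..2} \<Longrightarrow> \<bar>f' x\<bar> \<le> M"
  shows "\<And>u v. u \<in> {-1..2} \<Longrightarrow> v \<in> {-1..2} \<Longrightarrow> \<bar>f v - f u\<bar> \<le> M * \<bar>v - u\<bar>"
proof -
  have key: "\<bar>f v - f u\<bar> \<le> M * \<bar>v - u\<bar>" if uv: "u \<in> {-1..2}" "v \<in> {-1..2}" "u < v" for u v :: real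
  proof -
    obtain z where z: "u < z" "z < v" "f v - f u = (v - u) * f' z"
      using MVT2[OF uv(3), of f f'] d by blast
    have "z \<in> {-1..2}" using z uv by auto
    then have "\<bar>f' z\<bar> \<le> M" by (rule M)
    then show ?thesis using z uv by (simp add: abs_mult mult.commute mult_left_mono)
  qed
  fix u v :: real assume uv: "u \<in> {-1..2}" "v \<in> {-1..2}"
  consider "u < v" | "u = v" | "v < u" by linarith
  then show "\<bar>f v - f u\<bar> \<le> M * \<bar>v - u\<bar>"
  proof cases
    case 1 then show ?thesis using key uv by blast
  next
    case 2 then show ?thesis by simp
  next
    case 3 then show ?thesis using key[OF uv(2) uv(1) 3] by (simp add: abs_minus_commute)
  qed
qed

lemma bound_on_Icc:
  fixes g :: "real \<Rightarrow> real"
  assumes "continuous_on {-1..2} g"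
  obtains M where "0 \<le> M" "\<And>x. x \<in> {-1..2} \<Longrightarrow> \<bar>g x\<bar> \<le> M"
proof -
  have "bounded (g ` {-1..2})" by (rule compact_imp_bounded[OF compact_continuous_image[OF assms compact_Icc]])
  then obtain a where a: "\<forall>x\<in>g ` {-1..2}. \<bar>x\<bar> \<le> a" unfolding bounded_real by blast
  show ?thesis
  proof (rule that[of "max a 0"])
    fix x :: real assume "x \<in> {-1..2}"
    then have "\<bar>g x\<bar> \<le> a" using a by auto
    then show "\<bar>g x\<bar> \<le> max a 0" by (simp add: le_max_iff_disj)
  qed simp
qed

lemma H_props:
  fixes H H' H'' :: "real \<Rightarrow> real"
  assumes d1: "\<And>x. (H has_real_derivative H' x) (at x)"
    and d2: "\<And>x. (H' has_real_derivative H'' x) (at x)"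
    and c2: "continuous_on UNIV H''"
  obtains A B where "0 \<le> A" "0 \<le> B"
    "\<And>u v. u \<in> {-1..2} \<Longrightarrow> v \<in> {-1..2} \<Longrightarrow> \<bar>H v - H u\<bar> \<le> A * \<bar>v - u\<bar>"
    "\<And>u h. u \<in> {0..1} \<Longrightarrow> h \<in> {0..1} \<Longrightarrow> \<bar>H (u + h) - 2 * H u + H (u - h)\<bar> \<le> B * h\<^sup>2"
proof -
  have cH': "continuous_on {-1..2} H'"
    using d2 by (intro continuous_at_imp_continuous_on) (auto intro: DERIV_isCont)
  obtain A where A: "0 \<le> A" "\<And>x. x \<in> {-1..2} \<Longrightarrow> \<bar>H' x\<bar> \<le> A" using bound_on_Icc[OF cH'] by blast
  obtain B where B: "0 \<le> B" "\<And>x. x \<in> {-1..2} \<Longrightarrow> \<bar>H'' x\<bar> \<le> B"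
    using bound_on_Icc[OF continuous_on_subset[OF c2]] by blast
  note LipH = lip_from_deriv[OF d1 A(2)]
  note LipH' = lip_from_deriv[OF d2 B(2)]
  have SD: "\<bar>H (u + h) - 2 * H u + H (u - h)\<bar> \<le> (2 * B) * h\<^sup>2" if uh: "u \<in> {0..1}" "h \<in> {0..1}" for u h
  proof (cases "h = 0")
    case True then show ?thesis by simp
  next
    case False
    then have h: "0 < h" using uh by auto
    define g where "g t = H (u + t) + H (u - t)" for t
    have dg: "DERIV g t :> H' (u + t) - H' (u - t)" for t
      unfolding g_def
      by (auto intro!: derivative_eq_intros DERIV_chain2[OF d1] simp: algebra_simps)
    obtain s where s: "0 < s" "s < h" "g h - g 0 = (h - 0) * (H' (u + s) - H' (u - s))"
      using MVT2[OF h, of g "\<lambda>t. H' (u + t) - H' (u - t)"] dg by blast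
    have "\<bar>H' (u + s) - H' (u - s)\<bar> \<le> B * \<bar>(u + s) - (u - s)\<bar>"
      by (rule LipH') (use s uh in auto)
    also have "\<dots> = B * (2 * s)" using s by simp
    also have "\<dots> \<le> B * (2 * h)" using s B(1) by (intro mult_left_mono) auto
    finally have bd: "\<bar>H' (u + s) - H' (u - s)\<bar> \<le> B * (2 * h)" .
    have "\<bar>H (u + h) - 2 * H u + H (u - h)\<bar> = \<bar>g h - g 0\<bar>" by (simp add: g_def)
    also have "\<dots> = h * \<bar>H' (u + s) - H' (u - s)\<bar>" using s h by (simp add: abs_mult)
    also have "\<dots> \<le> h * (B * (2 * h))" using bd h by (intro mult_left_mono) auto
    also have "\<dots> = (2 * B) * h\<^sup>2" by (simp add: power2_eq_square)
    finally show ?thesis .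
  qed
  show ?thesis by (rule that[OF A(1) _ LipH SD]) (use B in auto)
qed


definition Ssum :: "(real \<times> (nat \<times> bool)) stream \<Rightarrow> nat \<Rightarrow> real" where
  "Ssum \<omega> n = (\<Sum>i<n. fst (\<omega> !! i))"

lemma Ssum_mono:
  assumes nn: "\<And>l. 0 \<le> fst (\<omega> !! l)" and "m \<le> n"
  shows "Ssum \<omega> m \<le> Ssum \<omega> n"
  unfolding Ssum_def by (rule sum_mono2) (use assms in auto)

lemma Ssum_add: "Ssum \<omega> (i + L) = Ssum \<omega> i + (\<Sum>l<L. fst (\<omega> !! (i + l)))"
  by (induction L) (simp_all add: Ssum_def)

lemma dc_set:
  assumes fin: "finite A" and pos: "\<And>n. n \<in> A \<Longrightarrow> 1 \<le> n"
    and dc: "\<And>m n. n \<in> A \<Longrightarrow> 1 \<le> m \<Longrightarrow> m \<le> n \<Longrightarrow> m \<in> A"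
  shows "A = {1..card A}"
proof (cases "A = {}")
  case True then show ?thesis by simp
next
  case False
  define m where "m = Max A"
  have mA: "m \<in> A" using fin False by (simp add: m_def)
  have "A = {1..m}"
  proof
    show "A \<subseteq> {1..m}" using pos fin by (auto simp: m_def)
    show "{1..m} \<subseteq> A" using dc mA by auto
  qed
  then show ?thesis by simp
qed

lemma njumps_char:
  assumes nn: "\<And>l. 0 \<le> fst (\<omega> !! l)" and K: "t < Ssum \<omega> K" and t0: "0 \<le> t"
  shows "{n. 1 \<le> n \<and> Ssum \<omega> n \<le> t} = {1..njumps \<omega> t}" and "njumps \<omega> t < K"
proof -
  define A where "A = {n. 1 \<le> n \<and> Ssum \<omega> n \<le> t}"
  have sub: "A \<subseteq> {1..<K}"
  proof
    fix n assume "n \<in> A"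
    then have n: "1 \<le> n" "Ssum \<omega> n \<le> t" by (auto simp: A_def)
    have "n < K"
    proof (rule ccontr)
      assume "\<not> n < K"
      then have "Ssum \<omega> K \<le> Ssum \<omega> n" by (intro Ssum_mono nn) simp
      then show False using n K by simp
    qed
    then show "n \<in> {1..<K}" using n by simp
  qed
  have fin: "finite A" using sub finite_subset by blast
  have nj: "njumps \<omega> t = card A" by (simp add: njumps_def A_def Ssum_def)
  have eq: "A = {1..card A}"
  proof (rule dc_set[OF fin])
    show "1 \<le> n" if "n \<in> A" for n using that by (simp add: A_def)
    show "m \<in> A" if "n \<in> A" "1 \<le> m" "m \<le> n" for m n
      using that Ssum_mono[OF nn, of m n] by (auto simp: A_def)
  qed
  have "{n. 1 \<le> n \<and> Ssum \<omega> n \<le> t} = A" by (simp only: A_def)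
  with eq nj show "{n. 1 \<le> n \<and> Ssum \<omega> n \<le> t} = {1..njumps \<omega> t}" by simp
  have K0: "K \<noteq> 0"
  proof
    assume "K = 0" then show False using K t0 by (simp add: Ssum_def)
  qed
  have "card A \<le> card {1..<K}" by (rule card_mono) (use sub in auto)
  then show "njumps \<omega> t < K" using K0 by (simp add: nj)
qed

lemma njumps_mono:
  assumes nn: "\<And>l. 0 \<le> fst (\<omega> !! l)" and K: "t < Ssum \<omega> K" and "s \<le> t"
  shows "njumps \<omega> s \<le> njumps \<omega> t"
proof -
  have "finite {n. 1 \<le> n \<and> Ssum \<omega> n \<le> t}"
  proof (rule finite_subset)
    show "{n. 1 \<le> n \<and> Ssum \<omega> n \<le> t} \<subseteq> {..<K}"
    proof
      fix n assume n: "n \<in> {n. 1 \<le> n \<and> Ssum \<omega> n \<le> t}"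
      show "n \<in> {..<K}"
      proof (rule ccontr)
        assume "n \<notin> {..<K}"
        then have "Ssum \<omega> K \<le> Ssum \<omega> n" by (intro Ssum_mono nn) simp
        then show False using n K by simp
      qed
    qed
  qed simp
  then show ?thesis unfolding njumps_def Ssum_def[symmetric]
    by (rule card_mono) (use assms in auto)
qed

lemma DET:
  fixes F :: "nat \<Rightarrow> real"
  assumes nn: "\<And>l. 0 \<le> fst (\<omega> !! l)" and KT: "T < Ssum \<omega> K"
    and win: "\<And>i. i < K \<Longrightarrow> \<delta> < (\<Sum>l<L. fst (\<omega> !! (i + l)))"
    and osc: "\<And>i n. i < K \<Longrightarrow> n \<le> L \<Longrightarrow> \<bar>F (i + n) - F i\<bar> \<le> \<epsilon>"
  shows "\<not> not_in_C T H \<delta> \<epsilon> (\<lambda>t. F (njumps \<omega> t))"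
proof
  assume "not_in_C T H \<delta> \<epsilon> (\<lambda>t. F (njumps \<omega> t))"
  then obtain s t where s: "s \<in> {0..T}" and t: "t \<in> {s..min (s + \<delta>) T}"
    and big: "\<bar>F (njumps \<omega> t) - F (njumps \<omega> s)\<bar> > \<epsilon>"
    unfolding not_in_C_def by blast
  define a where "a = njumps \<omega> s"
  define b where "b = njumps \<omega> t"
  have tle: "s \<le> t" "t \<le> T" "t \<le> s + \<delta>" "0 \<le> s" using s t by auto
  have tT: "t < Ssum \<omega> K" "s < Ssum \<omega> K" using tle KT by linarith+
  have t0: "0 \<le> t" "0 \<le> s" using tle by linarith+
  have aK: "a < K" unfolding a_def by (rule njumps_char(2)[OF nn tT(2) t0(2)])
  have bK: "b < K" unfolding b_def by (rule njumps_char(2)[OF nn tT(1) t0(1)])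
  have ab: "a \<le> b" unfolding a_def b_def by (rule njumps_mono[OF nn tT(1) tle(1)])
  have setA: "{n. 1 \<le> n \<and> Ssum \<omega> n \<le> s} = {1..a}" unfolding a_def by (rule njumps_char(1)[OF nn tT(2) t0(2)])
  have setB: "{n. 1 \<le> n \<and> Ssum \<omega> n \<le> t} = {1..b}" unfolding b_def by (rule njumps_char(1)[OF nn tT(1) t0(1)])
  have "b \<le> a + L"
  proof (rule ccontr)
    assume "\<not> b \<le> a + L"
    then have bL: "a + 1 + L \<le> b" by simp
    have "b \<in> {1..b}" using bL by simp
    then have "b \<in> {n. 1 \<le> n \<and> Ssum \<omega> n \<le> t}" by (simp only: setB)
    then have Sb: "Ssum \<omega> b \<le> t" by simp
    have "a + 1 \<notin> {1..a}" by simp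
    then have "a + 1 \<notin> {n. 1 \<le> n \<and> Ssum \<omega> n \<le> s}" by (simp only: setA not_False_eq_True)
    then have Sa: "\<not> Ssum \<omega> (a + 1) \<le> s" by simp
    have "Ssum \<omega> (a + 1 + L) \<le> Ssum \<omega> b" by (rule Ssum_mono[OF nn bL])
    moreover have "Ssum \<omega> (a + 1 + L) = Ssum \<omega> (a + 1) + (\<Sum>l<L. fst (\<omega> !! (a + 1 + l)))" by (rule Ssum_add)
    moreover have "\<delta> < (\<Sum>l<L. fst (\<omega> !! (a + 1 + l)))" by (rule win) (use bL bK in linarith)
    ultimately show False using Sb Sa tle by linarith
  qed
  then have "\<bar>F (a + (b - a)) - F a\<bar> \<le> \<epsilon>" by (intro osc[OF aK]) linarith
  moreover have "a + (b - a) = b" using ab by simp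
  ultimately show False using big unfolding a_def b_def by simp
qed


lemma conf_shift:
  "conf_after N \<eta> \<omega> (i + n) = conf_after N (conf_after N \<eta> \<omega> i) (sdrop i \<omega>) n"
  by (induction n) (simp_all add: sdrop_snth)

lemma pairing_shift:
  "pairing N (conf_after N \<eta> \<omega> (i + n)) H - pairing N (conf_after N \<eta> \<omega> i) H
   = Mp N H (conf_after N \<eta> \<omega> i) (sdrop i \<omega>) n + (\<Sum>l<n. dr N H (conf_after N (conf_after N \<eta> \<omega> i) (sdrop i \<omega>) l))"
  unfolding conf_shift Mp_def by simp

lemma drift_sum:
  assumes N: "2 \<le> N" and per: "\<And>y. H (y + 1) = H y" and A: "0 \<le> A" and B: "0 \<le> B"
    and Lip: "\<And>u v. u \<in> {-1..2} \<Longrightarrow> v \<in> {-1..2} \<Longrightarrow> \<bar>H v - H u\<bar> \<le> A * \<bar>v - u\<bar>"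
    and SD: "\<And>u h. u \<in> {0..1} \<Longrightarrow> h \<in> {0..1} \<Longrightarrow> \<bar>H (u + h) - 2 * H u + H (u - h)\<bar> \<le> B * h\<^sup>2"
  shows "\<bar>\<Sum>l<n. dr N H (g l)\<bar> \<le> real n * ((A + B) / real N ^ 3)"
proof -
  have "\<bar>\<Sum>l<n. dr N H (g l)\<bar> \<le> (\<Sum>l<n. \<bar>dr N H (g l)\<bar>)" by (rule sum_abs)
  also have "\<dots> \<le> (\<Sum>l<n. (A + B) / real N ^ 3)"
    by (intro sum_mono dr_bound[OF N per A B Lip SD])
  finally show ?thesis by simp
qed

lemma meas_G_Mp:
  "(\<lambda>\<omega>. ennreal (exp (m * (s * Mp N H (conf_after N \<eta>0 \<omega> i) (sdrop i \<omega>) n - a)))) \<in> borel_measurable (ssep_space N)"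
proof -
  have "\<And>\<eta>. (\<lambda>\<omega>. ennreal (exp (m * (s * Mp N H \<eta> \<omega> n - a)))) \<in> borel_measurable (ssep_space N)"
    using meas_Mp by measurable
  then show ?thesis by (rule meas_conf_G)
qed

lemma EM_shift:
  assumes N: "2 \<le> N" and A: "0 \<le> A" and per: "\<And>y. H (y + 1) = H y"
    and Lip: "\<And>u v. u \<in> {-1..2} \<Longrightarrow> v \<in> {-1..2} \<Longrightarrow> \<bar>H v - H u\<bar> \<le> A * \<bar>v - u\<bar>"
    and m: "0 \<le> m" and s: "\<bar>s\<bar> = 1" and nL: "n \<le> L"
  shows "(\<integral>\<^sup>+\<omega>. ennreal (exp (m * (s * Mp N H (conf_after N \<eta>0 \<omega> i) (sdrop i \<omega>) n - a))) \<partial>ssep_space N)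
     \<le> ennreal (exp (- m * a + real L * (m\<^sup>2 * (A / real N ^ 2)\<^sup>2 / 2)))"
proof -
  have N0: "0 < N" using N by simp
  have meas: "\<And>\<eta>. (\<lambda>\<omega>. ennreal (exp (m * (s * Mp N H \<eta> \<omega> n - a)))) \<in> borel_measurable (ssep_space N)"
    using meas_Mp by measurable
  define q where "q = m\<^sup>2 * (A / real N ^ 2)\<^sup>2 / 2"
  have q0: "0 \<le> q" by (simp add: q_def)
  show ?thesis unfolding q_def[symmetric]
  proof (rule shift_bound[OF N0 meas])
    fix \<eta>
    have "(\<integral>\<^sup>+\<omega>. ennreal (exp (m * (s * Mp N H \<eta> \<omega> n - a))) \<partial>ssep_space N)
        = (\<integral>\<^sup>+\<omega>. ennreal (exp (- m * a)) * ennreal (exp ((m * s) * Mp N H \<eta> \<omega> n)) \<partial>ssep_space N)"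
      by (intro nn_integral_cong) (simp add: algebra_simps flip: ennreal_mult exp_add)
    also have "\<dots> = ennreal (exp (- m * a)) * (\<integral>\<^sup>+\<omega>. ennreal (exp ((m * s) * Mp N H \<eta> \<omega> n)) \<partial>ssep_space N)"
      by (rule nn_integral_cmult) (use meas_Mp in measurable)
    also have "\<dots> \<le> ennreal (exp (- m * a)) * ennreal (exp (real n * ((m * s)\<^sup>2 * (A / real N ^ 2)\<^sup>2 / 2)))"
      by (intro mult_left_mono EM[OF N A per Lip] zero_le)
    also have "(m * s)\<^sup>2 * (A / real N ^ 2)\<^sup>2 / 2 = q"
    proof -
      have "s\<^sup>2 = 1" by (metis power2_abs s one_power2)
      then show ?thesis by (simp add: q_def power_mult_distrib)
    qed
    also have "ennreal (exp (- m * a)) * ennreal (exp (real n * q)) = ennreal (exp (- m * a + real n * q))"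
      by (subst exp_add, subst ennreal_mult) auto
    also have "\<dots> \<le> ennreal (exp (- m * a + real L * q))"
    proof (intro ennreal_leI)
      have "real n * q \<le> real L * q" using nL q0 by (intro mult_right_mono) auto
      then show "exp (- m * a + real n * q) \<le> exp (- m * a + real L * q)" by simp
    qed
    finally show "(\<integral>\<^sup>+\<omega>. ennreal (exp (m * (s * Mp N H \<eta> \<omega> n - a))) \<partial>ssep_space N)
        \<le> ennreal (exp (- m * a + real L * q))" .
  qed
qed

lemma ennreal_lt1: "ennreal x < 1 \<Longrightarrow> x < 1"
  by (metis ennreal_1 ennreal_leI not_less)

lemma Qbound1:
  fixes \<eta>0 :: "nat \<Rightarrow> bool"
  assumes N: "2 \<le> N" and per: "\<And>y. H (y + 1) = H y" and A: "0 < A" and B: "0 \<le> B"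
    and Lip: "\<And>u v. u \<in> {-1..2} \<Longrightarrow> v \<in> {-1..2} \<Longrightarrow> \<bar>H v - H u\<bar> \<le> A * \<bar>v - u\<bar>"
    and SD: "\<And>u h. u \<in> {0..1} \<Longrightarrow> h \<in> {0..1} \<Longrightarrow> \<bar>H (u + h) - 2 * H u + H (u - h)\<bar> \<le> B * h\<^sup>2"
    and eps: "0 < \<epsilon>" and L1: "1 \<le> L"
    and drift: "real L * ((A + B) / real N ^ 3) \<le> \<epsilon> / 2"
  shows "Q_notC N T \<eta>0 H \<delta> \<epsilon> \<le> exp (real N ^ 3 * T) * (1/2) ^ K + real K * (exp (real N ^ 3 * \<delta>) * (1/2) ^ L)
     + real K * (real L + 1) * (2 * exp (- (\<epsilon>/2)\<^sup>2 / (2 * real L * (A / real N ^ 2)\<^sup>2)))"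
proof -
  have N0: "0 < N" using N by simp
  define r where "r = real N ^ 3"
  have r0: "0 < r" using N0 by (simp add: r_def)
  define a where "a = \<epsilon> / 2"
  define c where "c = A / real N ^ 2"
  have c0: "0 < c" using A N0 by (simp add: c_def)
  define m where "m = a / (real L * c\<^sup>2)"
  have m0: "0 < m" using eps L1 c0 by (simp add: m_def a_def)
  define S where "S = ssep_space N"
  define X where "X = {\<omega> \<in> space S. not_in_C T H \<delta> \<epsilon> (\<lambda>t. pairing N (eta_t N \<eta>0 \<omega> t) H)}"
  define Mi :: "(real \<times> (nat \<times> bool)) stream \<Rightarrow> nat \<Rightarrow> nat \<Rightarrow> real" where "Mi \<omega> i n = Mp N H (conf_after N \<eta>0 \<omega> i) (sdrop i \<omega>) n" for \<omega> i n
  define f0 :: "(real \<times> (nat \<times> bool)) stream \<Rightarrow> ennreal" where "f0 \<omega> = (\<Sum>l. indicator {t::real. t < 0} (fst (\<omega> !! l)) :: ennreal)" for \<omega>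
  define f1 :: "(real \<times> (nat \<times> bool)) stream \<Rightarrow> ennreal" where "f1 \<omega> = ennreal (exp (r * T) * exp (- r * (\<Sum>l<K. fst (\<omega> !! l))))" for \<omega>
  define f2 :: "(real \<times> (nat \<times> bool)) stream \<Rightarrow> ennreal" where "f2 \<omega> = (\<Sum>i<K. ennreal (exp (r * \<delta>) * exp (- r * (\<Sum>l<L. fst (\<omega> !! (i + l))))))" for \<omega>
  define g3 :: "(real \<times> (nat \<times> bool)) stream \<Rightarrow> nat \<Rightarrow> nat \<Rightarrow> ennreal" where "g3 \<omega> i n = ennreal (exp (m * (1 * Mi \<omega> i n - a))) + ennreal (exp (m * ((-1) * Mi \<omega> i n - a)))" for \<omega> i n
  define f3 :: "(real \<times> (nat \<times> bool)) stream \<Rightarrow> ennreal" where "f3 \<omega> = (\<Sum>i<K. \<Sum>n\<in>{..L}. g3 \<omega> i n)" for \<omega>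
  have key: "1 \<le> f0 \<omega> + f1 \<omega> + f2 \<omega> + f3 \<omega>" if \<omega>X: "\<omega> \<in> X" for \<omega>
  proof (rule ccontr)
    assume "\<not> 1 \<le> f0 \<omega> + f1 \<omega> + f2 \<omega> + f3 \<omega>"
    then have lt: "f0 \<omega> + f1 \<omega> + f2 \<omega> + f3 \<omega> < 1" by simp
    have lt0: "f0 \<omega> < 1" by (rule le_less_trans[OF _ lt]) (simp add: add.assoc)
    have lt1: "f1 \<omega> < 1" by (rule le_less_trans[OF _ lt]) (metis add.commute add.left_commute le_iff_add)
    have lt2: "f2 \<omega> < 1" by (rule le_less_trans[OF _ lt]) (metis add.commute add.left_commute le_iff_add)
    have lt3: "f3 \<omega> < 1" by (rule le_less_trans[OF _ lt]) (metis add.commute le_iff_add)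
    have nn: "0 \<le> fst (\<omega> !! l)" for l
    proof -
      have "indicator {t::real. t < 0} (fst (\<omega> !! l)) < (1::ennreal)"
        using lt0 unfolding f0_def by (rule ennreal_suminf_lessD)
      then show ?thesis by (cases "fst (\<omega> !! l) < 0") (auto simp: indicator_def)
    qed
    have KT: "T < Ssum \<omega> K"
    proof -
      have "exp (r * T) * exp (- r * (\<Sum>l<K. fst (\<omega> !! l))) < 1"
        using lt1 unfolding f1_def by (rule ennreal_lt1)
      then have "r * T - r * (\<Sum>l<K. fst (\<omega> !! l)) < 0" by (simp add: exp_add[symmetric] algebra_simps)
      then show ?thesis using r0 by (simp add: Ssum_def algebra_simps)
    qed
    have win: "\<delta> < (\<Sum>l<L. fst (\<omega> !! (i + l)))" if i: "i < K" for i
    proof -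
      have "ennreal (exp (r * \<delta>) * exp (- r * (\<Sum>l<L. fst (\<omega> !! (i + l))))) \<le> f2 \<omega>"
        unfolding f2_def by (rule member_le_sum) (use i in auto)
      then have "exp (r * \<delta>) * exp (- r * (\<Sum>l<L. fst (\<omega> !! (i + l)))) < 1"
        using lt2 by (intro ennreal_lt1) (rule le_less_trans)
      then have "r * \<delta> - r * (\<Sum>l<L. fst (\<omega> !! (i + l))) < 0" by (simp add: exp_add[symmetric] algebra_simps)
      then show ?thesis using r0 by (simp add: algebra_simps)
    qed
    have osc: "\<bar>pairing N (conf_after N \<eta>0 \<omega> (i + n)) H - pairing N (conf_after N \<eta>0 \<omega> i) H\<bar> \<le> \<epsilon>"
      if i: "i < K" and n: "n \<le> L" for i n
    proof -
      have "g3 \<omega> i n \<le> (\<Sum>n\<in>{..L}. g3 \<omega> i n)" by (rule member_le_sum) (use n in auto)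
      also have "\<dots> \<le> f3 \<omega>" unfolding f3_def by (rule member_le_sum) (use i in auto)
      finally have "g3 \<omega> i n < 1" using lt3 by simp
      then have e1: "ennreal (exp (m * (1 * Mi \<omega> i n - a))) < 1" and e2: "ennreal (exp (m * ((-1) * Mi \<omega> i n - a))) < 1"
        unfolding g3_def by (metis add.commute le_iff_add le_less_trans)+
      have "m * (1 * Mi \<omega> i n - a) < 0" using ennreal_lt1[OF e1] by simp
      then have p1: "Mi \<omega> i n < a" using m0 by (simp add: mult_less_0_iff)
      have "m * ((-1) * Mi \<omega> i n - a) < 0" using ennreal_lt1[OF e2] by simp
      then have p2: "- Mi \<omega> i n < a" using m0 by (simp add: mult_less_0_iff)
      have dr: "\<bar>\<Sum>l<n. dr N H (conf_after N (conf_after N \<eta>0 \<omega> i) (sdrop i \<omega>) l)\<bar> \<le> real n * ((A + B) / real N ^ 3)"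
        by (rule drift_sum[OF N per _ B Lip SD]) (use A in simp)
      also have "\<dots> \<le> real L * ((A + B) / real N ^ 3)" using n A B by (intro mult_right_mono) auto
      also have "\<dots> \<le> a" using drift by (simp add: a_def)
      finally have dr: "\<bar>\<Sum>l<n. dr N H (conf_after N (conf_after N \<eta>0 \<omega> i) (sdrop i \<omega>) l)\<bar> \<le> a" .
      show ?thesis unfolding pairing_shift using p1 p2 dr by (simp add: Mi_def a_def abs_le_iff) linarith?
    qed
    have path: "(\<lambda>t. pairing N (eta_t N \<eta>0 \<omega> t) H) = (\<lambda>t. (\<lambda>k. pairing N (conf_after N \<eta>0 \<omega> k) H) (njumps \<omega> t))"
      by (simp add: eta_t_def)
    have "\<not> not_in_C T H \<delta> \<epsilon> (\<lambda>t. (\<lambda>k. pairing N (conf_after N \<eta>0 \<omega> k) H) (njumps \<omega> t))"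
      by (rule DET[OF nn KT win]) (use osc in auto)
    then show False using \<omega>X unfolding X_def by (simp add: eta_t_def)
  qed
  have mf0: "f0 \<in> borel_measurable S" unfolding f0_def S_def by measurable
  have mf1: "f1 \<in> borel_measurable S" unfolding f1_def S_def by measurable
  have mf2: "f2 \<in> borel_measurable S" unfolding f2_def S_def by measurable
  have mg3: "(\<lambda>\<omega>. g3 \<omega> i n) \<in> borel_measurable S" for i n
    unfolding g3_def Mi_def S_def by (intro borel_measurable_add meas_G_Mp)
  have mf3: "f3 \<in> borel_measurable S" unfolding f3_def by (intro borel_measurable_sum mg3)
  have int0: "(\<integral>\<^sup>+\<omega>. f0 \<omega> \<partial>S) = 0"
  proof -
    have "(\<integral>\<^sup>+\<omega>. f0 \<omega> \<partial>S) = (\<Sum>l. \<integral>\<^sup>+\<omega>. indicator {t::real. t < 0} (fst (\<omega> !! l)) \<partial>S)"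
      unfolding f0_def by (rule nn_integral_suminf) (unfold S_def, measurable)
    also have "\<dots> = 0" unfolding S_def by (simp add: neg_null[OF N0])
    finally show ?thesis .
  qed
  have int1: "(\<integral>\<^sup>+\<omega>. f1 \<omega> \<partial>S) \<le> ennreal (exp (r * T) * (1/2) ^ K)"
  proof -
    have "(\<integral>\<^sup>+\<omega>. f1 \<omega> \<partial>S) = (\<integral>\<^sup>+\<omega>. ennreal (exp (r * T)) * ennreal (exp (- r * (\<Sum>l<K. fst (\<omega> !! l)))) \<partial>S)"
      unfolding f1_def by (intro nn_integral_cong) (simp add: ennreal_mult)
    also have "\<dots> = ennreal (exp (r * T)) * (\<integral>\<^sup>+\<omega>. ennreal (exp (- r * (\<Sum>l<K. fst (\<omega> !! l)))) \<partial>S)"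
      by (rule nn_integral_cmult) (unfold S_def, measurable)
    also have "\<dots> \<le> ennreal (exp (r * T)) * ennreal ((1/2) ^ K)"
      by (intro mult_left_mono zero_le) (unfold S_def r_def, rule tau_sum[OF N0])
    also have "\<dots> = ennreal (exp (r * T) * (1/2) ^ K)" by (simp add: ennreal_mult)
    finally show ?thesis .
  qed
  have int2: "(\<integral>\<^sup>+\<omega>. f2 \<omega> \<partial>S) \<le> (\<Sum>i<K. ennreal (exp (r * \<delta>) * (1/2) ^ L))"
  proof -
    have "(\<integral>\<^sup>+\<omega>. f2 \<omega> \<partial>S) = (\<Sum>i<K. \<integral>\<^sup>+\<omega>. ennreal (exp (r * \<delta>) * exp (- r * (\<Sum>l<L. fst (\<omega> !! (i + l))))) \<partial>S)"
      unfolding f2_def by (rule nn_integral_sum) (unfold S_def, measurable)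
    also have "\<dots> \<le> (\<Sum>i<K. ennreal (exp (r * \<delta>) * (1/2) ^ L))"
    proof (rule sum_mono)
      fix i
      have "(\<integral>\<^sup>+\<omega>. ennreal (exp (r * \<delta>) * exp (- r * (\<Sum>l<L. fst (\<omega> !! (i + l))))) \<partial>S)
          = (\<integral>\<^sup>+\<omega>. ennreal (exp (r * \<delta>)) * ennreal (exp (- r * (\<Sum>l<L. fst (\<omega> !! (i + l))))) \<partial>S)"
        by (intro nn_integral_cong) (simp add: ennreal_mult)
      also have "\<dots> = ennreal (exp (r * \<delta>)) * (\<integral>\<^sup>+\<omega>. ennreal (exp (- r * (\<Sum>l<L. fst (\<omega> !! (i + l))))) \<partial>S)"
        by (rule nn_integral_cmult) (unfold S_def, measurable)
      also have "\<dots> \<le> ennreal (exp (r * \<delta>)) * ennreal ((1/2) ^ L)"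
        by (intro mult_left_mono zero_le) (unfold S_def r_def, rule tau_sum_shift[OF N0])
      also have "\<dots> = ennreal (exp (r * \<delta>) * (1/2) ^ L)" by (simp add: ennreal_mult)
      finally show "(\<integral>\<^sup>+\<omega>. ennreal (exp (r * \<delta>) * exp (- r * (\<Sum>l<L. fst (\<omega> !! (i + l))))) \<partial>S) \<le> ennreal (exp (r * \<delta>) * (1/2) ^ L)" .
    qed
    finally show ?thesis .
  qed
  define E where "E = exp (- m * a + real L * (m\<^sup>2 * (A / real N ^ 2)\<^sup>2 / 2))"
  have int3: "(\<integral>\<^sup>+\<omega>. f3 \<omega> \<partial>S) \<le> (\<Sum>i<K. \<Sum>n\<in>{..L}. ennreal E + ennreal E)"
  proof -
    have "(\<integral>\<^sup>+\<omega>. f3 \<omega> \<partial>S) = (\<Sum>i<K. \<integral>\<^sup>+\<omega>. (\<Sum>n\<in>{..L}. g3 \<omega> i n) \<partial>S)"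
      unfolding f3_def by (rule nn_integral_sum) (intro borel_measurable_sum mg3)
    also have "\<dots> = (\<Sum>i<K. \<Sum>n\<in>{..L}. \<integral>\<^sup>+\<omega>. g3 \<omega> i n \<partial>S)"
      by (intro sum.cong refl nn_integral_sum mg3)
    also have "\<dots> \<le> (\<Sum>i<K. \<Sum>n\<in>{..L}. ennreal E + ennreal E)"
    proof (intro sum_mono)
      fix i n assume n: "n \<in> {..L}"
      have "(\<integral>\<^sup>+\<omega>. g3 \<omega> i n \<partial>S) = (\<integral>\<^sup>+\<omega>. ennreal (exp (m * (1 * Mi \<omega> i n - a))) \<partial>S) + (\<integral>\<^sup>+\<omega>. ennreal (exp (m * ((-1) * Mi \<omega> i n - a))) \<partial>S)"
        unfolding g3_def Mi_def S_def by (rule nn_integral_add) (intro meas_G_Mp)+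
      also have "\<dots> \<le> ennreal E + ennreal E"
        unfolding E_def Mi_def S_def using m0 n
        by (intro add_mono EM_shift[OF N _ per Lip]) (use A in auto)
      finally show "(\<integral>\<^sup>+\<omega>. g3 \<omega> i n \<partial>S) \<le> ennreal E + ennreal E" .
    qed
    finally show ?thesis .
  qed
  have Eeq: "E = exp (- (\<epsilon>/2)\<^sup>2 / (2 * real L * (A / real N ^ 2)\<^sup>2))"
  proof -
    have "- m * a + real L * (m\<^sup>2 * c\<^sup>2 / 2) = - a\<^sup>2 / (2 * real L * c\<^sup>2)"
      using L1 c0 by (simp add: m_def field_simps power2_eq_square)
    then show ?thesis by (simp add: E_def c_def a_def)
  qed
  define total where "total = exp (real N ^ 3 * T) * (1/2) ^ K + real K * (exp (real N ^ 3 * \<delta>) * (1/2) ^ L)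
     + real K * (real L + 1) * (2 * exp (- (\<epsilon>/2)\<^sup>2 / (2 * real L * (A / real N ^ 2)\<^sup>2)))"
  have tot0: "0 \<le> total" by (simp add: total_def)
  have intf: "(\<integral>\<^sup>+\<omega>. f0 \<omega> + f1 \<omega> + f2 \<omega> + f3 \<omega> \<partial>S) \<le> ennreal total"
  proof -
    have "(\<integral>\<^sup>+\<omega>. f0 \<omega> + f1 \<omega> + f2 \<omega> + f3 \<omega> \<partial>S) = (\<integral>\<^sup>+\<omega>. f0 \<omega> \<partial>S) + (\<integral>\<^sup>+\<omega>. f1 \<omega> \<partial>S) + (\<integral>\<^sup>+\<omega>. f2 \<omega> \<partial>S) + (\<integral>\<^sup>+\<omega>. f3 \<omega> \<partial>S)"
      using mf0 mf1 mf2 mf3 by (simp add: nn_integral_add)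
    also have "\<dots> \<le> 0 + ennreal (exp (r * T) * (1/2) ^ K) + (\<Sum>i<K. ennreal (exp (r * \<delta>) * (1/2) ^ L)) + (\<Sum>i<K. \<Sum>n\<in>{..L}. ennreal E + ennreal E)"
      using int0 int1 int2 int3 by (intro add_mono) auto
    also have "\<dots> = ennreal total"
    proof -
      have E0: "0 \<le> E" by (simp add: E_def)
      have e2: "ennreal E + ennreal E = ennreal (2 * E)" using ennreal_plus[OF E0 E0] by (simp only: mult_2)
      have i3: "(\<Sum>n\<in>{..L}. ennreal (2 * E)) = ennreal (\<Sum>n\<in>{..L}. 2 * E)" for i :: nat
        by (rule sum_ennreal) (use E0 in simp)
      have o3: "(\<Sum>i<K. ennreal (\<Sum>n\<in>{..L}. 2 * E)) = ennreal (\<Sum>i<K. \<Sum>n\<in>{..L}. 2 * E)"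
        by (rule sum_ennreal) (use E0 in \<open>simp add: sum_nonneg\<close>)
      have r3: "(\<Sum>i<K. \<Sum>n\<in>{..L}. 2 * E) = real K * ((real L + 1) * (2 * E))" by simp
      have s3: "(\<Sum>i<K. \<Sum>n\<in>{..L}. ennreal E + ennreal E) = ennreal (real K * ((real L + 1) * (2 * E)))"
        by (simp only: e2 i3 o3 r3)
      have b20: "0 \<le> exp (r * \<delta>) * (1/2::real) ^ L" by simp
      have o2: "(\<Sum>i<K. ennreal (exp (r * \<delta>) * (1/2) ^ L)) = ennreal (\<Sum>i<K. exp (r * \<delta>) * (1/2) ^ L)"
        by (rule sum_ennreal) (rule b20)
      have r2: "(\<Sum>i<K. exp (r * \<delta>) * (1/2::real) ^ L) = real K * (exp (r * \<delta>) * (1/2) ^ L)" by simp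
      have x0: "0 \<le> exp (r * T) * (1/2::real) ^ K" by simp
      have y0: "0 \<le> real K * (exp (r * \<delta>) * (1/2::real) ^ L)" by simp
      have z0: "0 \<le> real K * ((real L + 1) * (2 * E))" using E0 by simp
      have "0 + ennreal (exp (r * T) * (1/2) ^ K) + (\<Sum>i<K. ennreal (exp (r * \<delta>) * (1/2) ^ L)) + (\<Sum>i<K. \<Sum>n\<in>{..L}. ennreal E + ennreal E)
          = ennreal (exp (r * T) * (1/2) ^ K) + ennreal (real K * (exp (r * \<delta>) * (1/2) ^ L)) + ennreal (real K * ((real L + 1) * (2 * E)))"
        by (simp only: o2 r2 s3 add_0_left)
      also have "\<dots> = ennreal (exp (r * T) * (1/2) ^ K + real K * (exp (r * \<delta>) * (1/2) ^ L) + real K * ((real L + 1) * (2 * E)))"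
        by (simp only: ennreal_plus[OF add_nonneg_nonneg[OF x0 y0] z0] ennreal_plus[OF x0 y0])
      also have "exp (r * T) * (1/2) ^ K + real K * (exp (r * \<delta>) * (1/2) ^ L) + real K * ((real L + 1) * (2 * E)) = total"
        unfolding total_def Eeq r_def by (simp only: mult.assoc)
      finally show ?thesis .
    qed
    finally show ?thesis .
  qed
  show ?thesis
  proof (cases "X \<in> sets S")
    case False
    then have "Q_notC N T \<eta>0 H \<delta> \<epsilon> = 0" unfolding Q_notC_def X_def[symmetric] S_def[symmetric]
      by (simp add: measure_notin_sets)
    then show ?thesis using tot0 unfolding total_def by simp
  next
    case True
    interpret P: prob_space S unfolding S_def by (rule prob_S[OF N0])
    have "emeasure S X = (\<integral>\<^sup>+\<omega>. indicator X \<omega> \<partial>S)" using True by simp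
    also have "\<dots> \<le> (\<integral>\<^sup>+\<omega>. f0 \<omega> + f1 \<omega> + f2 \<omega> + f3 \<omega> \<partial>S)"
      by (intro nn_integral_mono) (use key in \<open>auto simp: indicator_def\<close>)
    also have "\<dots> \<le> ennreal total" by (rule intf)
    finally have "ennreal (measure S X) \<le> ennreal total" by (simp add: P.emeasure_eq_measure)
    then have "measure S X \<le> total" using tot0 by (simp add: ennreal_le_iff)
    then show ?thesis unfolding Q_notC_def X_def[symmetric] S_def[symmetric] total_def .
  qed
qed


lemma half_pow: "(1/2::real) ^ K \<le> exp (- real K / 2)"
proof -
  have e: "exp (1/2::real) \<le> 2"
  proof (rule ccontr)
    assume "\<not> exp (1/2::real) \<le> 2"
    then have "2 * 2 < exp (1/2::real) * exp (1/2)" by (intro mult_strict_mono) auto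
    also have "\<dots> = exp 1" by (simp flip: exp_add)
    finally show False using exp_le by simp
  qed
  have "exp (real K / 2) = exp (1/2) ^ K" by (simp flip: exp_of_nat_mult)
  also have "\<dots> \<le> 2 ^ K" by (intro power_mono e) simp
  finally have "exp (real K / 2) \<le> 2 ^ K" .
  then have "1 / (2::real) ^ K \<le> 1 / exp (real K / 2)" by (intro divide_left_mono) auto
  then show ?thesis by (simp add: power_one_over exp_minus field_simps)
qed

lemma ceil_bounds:
  assumes "0 \<le> x"
  shows "x \<le> real (nat \<lceil>x\<rceil>)" "real (nat \<lceil>x\<rceil>) \<le> x + 1"
  using assms by (auto simp: of_nat_nat)

lemma Qbound2:
  fixes \<eta>0 :: "nat \<Rightarrow> bool"
  assumes N: "2 \<le> N" and per: "\<And>y. H (y + 1) = H y" and A: "0 < A" and B: "0 \<le> B"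
    and Lip: "\<And>u v. u \<in> {-1..2} \<Longrightarrow> v \<in> {-1..2} \<Longrightarrow> \<bar>H v - H u\<bar> \<le> A * \<bar>v - u\<bar>"
    and SD: "\<And>u h. u \<in> {0..1} \<Longrightarrow> h \<in> {0..1} \<Longrightarrow> \<bar>H (u + h) - 2 * H u + H (u - h)\<bar> \<le> B * h\<^sup>2"
    and eps: "0 < \<epsilon>" and T: "0 < T" and d: "0 < \<delta>" and dlt: "\<delta> \<le> \<epsilon> / (10 * (A + B))"
    and N1: "1 \<le> real N ^ 3 * \<delta>"
    and N2: "\<epsilon>\<^sup>2 / (40 * A\<^sup>2) / \<delta> \<le> real N ^ 2 * T"
    and N3: "\<epsilon>\<^sup>2 / (40 * A\<^sup>2) / \<delta> \<le> real N ^ 2 * \<delta>"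
  shows "Q_notC N T \<eta>0 H \<delta> \<epsilon> \<le> (1 + (4 * T + 1) + 2 * (4 * T + 1) * (4 * \<delta> + 2)) * (real N ^ 3)\<^sup>2
           * exp (- (\<epsilon>\<^sup>2 / (40 * A\<^sup>2) / \<delta>) * real N)"
proof -
  define r where "r = real N ^ 3"
  define k where "k = \<epsilon>\<^sup>2 / (40 * A\<^sup>2) / \<delta>"
  define e where "e = exp (- k * real N)"
  define K where "K = nat \<lceil>4 * r * T\<rceil>"
  define L where "L = nat \<lceil>4 * r * \<delta>\<rceil>"
  have Nr: "1 \<le> real N" using N by simp
  have r1: "1 \<le> r" unfolding r_def using Nr by simp
  have rd: "1 \<le> r * \<delta>" using N1 by (simp add: r_def)
  have K1: "4 * r * T \<le> real K" "real K \<le> 4 * r * T + 1" unfolding K_def using ceil_bounds[of "4*r*T"] r1 T by auto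
  have L1: "4 * r * \<delta> \<le> real L" "real L \<le> 4 * r * \<delta> + 1" unfolding L_def using ceil_bounds[of "4*r*\<delta>"] r1 d by auto
  have Lge: "1 \<le> L" using L1 rd by linarith
  have L5: "real L \<le> 5 * r * \<delta>" using L1 rd by linarith
  have AB: "0 < A + B" using A B by simp
  have drift: "real L * ((A + B) / real N ^ 3) \<le> \<epsilon> / 2"
  proof -
    have "real L * ((A + B) / real N ^ 3) \<le> (5 * r * \<delta>) * ((A + B) / r)"
      unfolding r_def[symmetric] using L5 AB r1 by (intro mult_right_mono) auto
    also have "\<dots> = 5 * \<delta> * (A + B)" using r1 by (simp add: field_simps)
    also have "\<dots> \<le> 5 * (\<epsilon> / (10 * (A + B))) * (A + B)" using dlt AB by (intro mult_right_mono) auto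
    also have "\<dots> = \<epsilon> / 2" using AB by (simp add: field_simps)
    finally show ?thesis .
  qed
  have Q: "Q_notC N T \<eta>0 H \<delta> \<epsilon> \<le> exp (r * T) * (1/2) ^ K + real K * (exp (r * \<delta>) * (1/2) ^ L)
     + real K * (real L + 1) * (2 * exp (- (\<epsilon>/2)\<^sup>2 / (2 * real L * (A / real N ^ 2)\<^sup>2)))"
    unfolding r_def by (rule Qbound1[OF N per A B Lip SD eps Lge drift])
  have kN: "k * real N \<le> r * T" "k * real N \<le> r * \<delta>"
  proof -
    have "k * real N \<le> (real N ^ 2 * T) * real N" using N2 Nr by (intro mult_right_mono) (auto simp: k_def)
    then show "k * real N \<le> r * T" by (simp add: r_def power2_eq_square power3_eq_cube algebra_simps)
    have "k * real N \<le> (real N ^ 2 * \<delta>) * real N" using N3 Nr by (intro mult_right_mono) (auto simp: k_def)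
    then show "k * real N \<le> r * \<delta>" by (simp add: r_def power2_eq_square power3_eq_cube algebra_simps)
  qed
  have t1: "exp (r * T) * (1/2) ^ K \<le> e"
  proof -
    have "exp (r * T) * (1/2) ^ K \<le> exp (r * T) * exp (- real K / 2)" by (intro mult_left_mono half_pow) simp
    also have "\<dots> = exp (r * T - real K / 2)" by (subst exp_add[symmetric]) simp
    also have "\<dots> \<le> e" unfolding e_def using K1 kN by simp
    finally show ?thesis .
  qed
  have t2: "exp (r * \<delta>) * (1/2) ^ L \<le> e"
  proof -
    have "exp (r * \<delta>) * (1/2) ^ L \<le> exp (r * \<delta>) * exp (- real L / 2)" by (intro mult_left_mono half_pow) simp
    also have "\<dots> = exp (r * \<delta> - real L / 2)" by (subst exp_add[symmetric]) simp
    also have "\<dots> \<le> e" unfolding e_def using L1 kN by simp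
    finally show ?thesis .
  qed
  have t3: "exp (- (\<epsilon>/2)\<^sup>2 / (2 * real L * (A / real N ^ 2)\<^sup>2)) \<le> e"
  proof -
    have Lp: "0 < real L" using Lge by simp
    have eq: "(\<epsilon>/2)\<^sup>2 / (2 * real L * (A / real N ^ 2)\<^sup>2) = \<epsilon>\<^sup>2 * (real N ^ 3 * real N) / (8 * real L * A\<^sup>2)"
      using A Lp Nr by (simp add: field_simps power2_eq_square power3_eq_cube)
    have "k * real N = \<epsilon>\<^sup>2 * (r * real N) / (8 * (5 * r * \<delta>) * A\<^sup>2)"
      using A d r1 by (simp add: k_def field_simps power2_eq_square)
    also have "\<dots> \<le> \<epsilon>\<^sup>2 * (r * real N) / (8 * real L * A\<^sup>2)"
      using L5 Lp A r1 Nr d by (intro divide_left_mono mult_right_mono mult_left_mono mult_pos_pos) auto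
    finally have "k * real N \<le> (\<epsilon>/2)\<^sup>2 / (2 * real L * (A / real N ^ 2)\<^sup>2)" unfolding eq r_def .
    then show ?thesis unfolding e_def by simp
  qed
  have e0: "0 \<le> e" by (simp add: e_def)
  have "Q_notC N T \<eta>0 H \<delta> \<epsilon> \<le> e + real K * e + real K * (real L + 1) * (2 * e)"
    using Q t1 t2 t3 e0 by (smt (verit) mult_left_mono of_nat_0_le_iff zero_le_mult_iff)
  also have "\<dots> = (1 + real K + 2 * real K * (real L + 1)) * e" by (simp add: algebra_simps)
  also have "\<dots> \<le> (1 + (4 * T + 1) + 2 * (4 * T + 1) * (4 * \<delta> + 2)) * r\<^sup>2 * e"
  proof -
    have Kr: "real K \<le> (4 * T + 1) * r" using K1 r1 by (simp add: algebra_simps)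
    have Lr: "real L + 1 \<le> (4 * \<delta> + 2) * r" using L1 r1 by (simp add: algebra_simps)
    have r2: "r \<le> r\<^sup>2" using r1 by (simp add: power2_eq_square)
    have "real K * (real L + 1) \<le> ((4 * T + 1) * r) * ((4 * \<delta> + 2) * r)"
      using Kr Lr by (intro mult_mono) auto
    then have a: "2 * real K * (real L + 1) \<le> 2 * (4 * T + 1) * (4 * \<delta> + 2) * r\<^sup>2"
      by (simp add: power2_eq_square algebra_simps)
    have b: "real K \<le> (4 * T + 1) * r\<^sup>2" using Kr r2 T by (smt (verit) mult_left_mono)
    have c: "1 \<le> r\<^sup>2" using r1 r2 by linarith
    have "1 + real K + 2 * real K * (real L + 1) \<le> (1 + (4 * T + 1) + 2 * (4 * T + 1) * (4 * \<delta> + 2)) * r\<^sup>2"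
      using a b c by (simp add: algebra_simps)
    then show ?thesis using e0 by (intro mult_right_mono) auto
  qed
  finally show ?thesis unfolding r_def e_def k_def .
qed


lemma aux_half: "2 * (\<bar>c\<bar> + 1) < (t::real) \<Longrightarrow> - (t / 2) < c"
  by (cases "0 \<le> c") auto

lemma LS:
  fixes \<eta>0 :: "nat \<Rightarrow> nat \<Rightarrow> bool"
  assumes per: "\<And>y. H (y + 1) = H y" and A: "0 < A" and B: "0 \<le> B"
    and Lip: "\<And>u v. u \<in> {-1..2} \<Longrightarrow> v \<in> {-1..2} \<Longrightarrow> \<bar>H v - H u\<bar> \<le> A * \<bar>v - u\<bar>"
    and SD: "\<And>u h. u \<in> {0..1} \<Longrightarrow> h \<in> {0..1} \<Longrightarrow> \<bar>H (u + h) - 2 * H u + H (u - h)\<bar> \<le> B * h\<^sup>2"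
    and eps: "0 < \<epsilon>" and T: "0 < T" and d: "0 < \<delta>" and dlt: "\<delta> \<le> \<epsilon> / (10 * (A + B))"
  shows "limsup (\<lambda>N. scaled_log N (Q_notC N T (\<eta>0 N) H \<delta> \<epsilon>)) \<le> ereal (- ((\<epsilon>\<^sup>2 / (40 * A\<^sup>2) / \<delta>) / 2))"
proof (rule Limsup_bounded)
  define k where "k = \<epsilon>\<^sup>2 / (40 * A\<^sup>2) / \<delta>"
  have k0: "0 < k" using eps A d by (simp add: k_def)
  define C0 where "C0 = 1 + (4 * T + 1) + 2 * (4 * T + 1) * (4 * \<delta> + 2)"
  have C0: "0 < C0"
  proof -
    have "0 \<le> 2 * (4 * T + 1) * (4 * \<delta> + 2)" using T d by simp
    then show ?thesis unfolding C0_def using T by linarith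
  qed
  define M where "M = max 2 (max (1 / \<delta>) (max (k / T) (k / \<delta>)))"
  have ev1: "eventually (\<lambda>N. M \<le> real N) sequentially"
    using filterlim_real_sequentially by (simp add: filterlim_at_top)
  have lim: "(\<lambda>N. ln C0 / real N + 6 * (ln (real N) / real N)) \<longlonglongrightarrow> 0 + 6 * 0"
    by (intro tendsto_add tendsto_mult tendsto_const lim_const_over_n lim_ln_over_n)
  have ev2: "eventually (\<lambda>N. ln C0 / real N + 6 * (ln (real N) / real N) < k / 2) sequentially"
    by (rule order_tendstoD(2)[OF lim]) (use k0 in simp)
  show "eventually (\<lambda>N. scaled_log N (Q_notC N T (\<eta>0 N) H \<delta> \<epsilon>) \<le> ereal (- ((\<epsilon>\<^sup>2 / (40 * A\<^sup>2) / \<delta>) / 2))) sequentially"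
    using ev1 ev2
  proof eventually_elim
    case (elim N)
    have NM: "M \<le> real N" by fact
    have N2: "2 \<le> real N" using NM by (simp add: M_def)
    then have N: "2 \<le> N" by simp
    have Nge1: "1 \<le> real N" using N2 by simp
    have n1: "1 / \<delta> \<le> real N" "k / T \<le> real N" "k / \<delta> \<le> real N" using NM by (auto simp: M_def)
    have s1: "real N * 1 \<le> real N * real N" by (rule mult_left_mono) (use Nge1 in auto)
    have s2: "real N * real N * 1 \<le> real N * real N * real N" by (rule mult_left_mono) (use Nge1 in auto)
    have sq: "real N \<le> real N ^ 2" "real N \<le> real N ^ 3" using s1 s2 by (auto simp: power2_eq_square power3_eq_cube)
    have c1: "1 \<le> real N ^ 3 * \<delta>"
    proof -
      have "1 \<le> real N * \<delta>" using n1(1) d by (simp add: field_simps)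
      also have "\<dots> \<le> real N ^ 3 * \<delta>" using sq d by (intro mult_right_mono) auto
      finally show ?thesis .
    qed
    have c2: "k \<le> real N ^ 2 * T"
    proof -
      have "k \<le> real N * T" using n1(2) T by (simp add: field_simps)
      also have "\<dots> \<le> real N ^ 2 * T" using sq T by (intro mult_right_mono) auto
      finally show ?thesis .
    qed
    have c3: "k \<le> real N ^ 2 * \<delta>"
    proof -
      have "k \<le> real N * \<delta>" using n1(3) d by (simp add: field_simps)
      also have "\<dots> \<le> real N ^ 2 * \<delta>" using sq d by (intro mult_right_mono) auto
      finally show ?thesis .
    qed
    have Qb: "Q_notC N T (\<eta>0 N) H \<delta> \<epsilon> \<le> C0 * (real N ^ 3)\<^sup>2 * exp (- k * real N)"
      unfolding C0_def k_def
      by (rule Qbound2[OF N per A B Lip SD eps T d dlt c1]) (use c2 c3 in \<open>simp_all add: k_def\<close>)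
    show ?case
    proof (cases "Q_notC N T (\<eta>0 N) H \<delta> \<epsilon> = 0")
      case True then show ?thesis by (simp add: scaled_log_def)
    next
      case False
      have Qp: "0 < Q_notC N T (\<eta>0 N) H \<delta> \<epsilon>" using False by (simp add: Q_notC_def order_le_neq_trans)
      have Np: "0 < real N" using Nge1 by simp
      have "ln (Q_notC N T (\<eta>0 N) H \<delta> \<epsilon>) \<le> ln (C0 * (real N ^ 3)\<^sup>2 * exp (- k * real N))"
        using Qp Qb by (subst ln_le_cancel_iff) auto
      also have "\<dots> = ln C0 + 6 * ln (real N) - k * real N"
        using C0 Np by (simp add: ln_mult ln_realpow flip: power_mult)
      finally have l: "ln (Q_notC N T (\<eta>0 N) H \<delta> \<epsilon>) \<le> ln C0 + 6 * ln (real N) - k * real N" .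
      have "ln (Q_notC N T (\<eta>0 N) H \<delta> \<epsilon>) / real N \<le> (ln C0 + 6 * ln (real N) - k * real N) / real N"
        using l Np by (simp add: divide_right_mono)
      also have "\<dots> = ln C0 / real N + 6 * (ln (real N) / real N) - k" using Np by (simp add: field_simps)
      also have "\<dots> \<le> - (k / 2)" using elim(2) by linarith
      finally show ?thesis using False by (simp add: scaled_log_def k_def)
    qed
  qed
qed

theorem lemma5p15:
  fixes T \<epsilon> :: real and H :: "real \<Rightarrow> real" and \<eta>0 :: "nat \<Rightarrow> nat \<Rightarrow> bool"
  assumes "T > 0" and "\<epsilon> > 0" and "C2_torus H"
  shows "((\<lambda>\<delta>. limsup (\<lambda>N. scaled_log N (Q_notC N T (\<eta>0 N) H \<delta> \<epsilon>))) \<longlongrightarrow> - \<infinity>) (at_right 0)"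
proof -
  from assms(3) have per: "\<And>y. H (y + 1) = H y"
    and "\<exists>H' H''. (\<forall>x. (H has_real_derivative H' x) (at x)) \<and> (\<forall>x. (H' has_real_derivative H'' x) (at x)) \<and> continuous_on UNIV H''"
    unfolding C2_torus_def by blast+
  then obtain H' H'' where d1: "\<And>x. (H has_real_derivative H' x) (at x)"
    and d2: "\<And>x. (H' has_real_derivative H'' x) (at x)" and c2: "continuous_on UNIV H''" by blast
  obtain A0 B where A0: "0 \<le> A0" and B: "0 \<le> B"
    and Lip0: "\<And>u v. u \<in> {-1..2} \<Longrightarrow> v \<in> {-1..2} \<Longrightarrow> \<bar>H v - H u\<bar> \<le> A0 * \<bar>v - u\<bar>"
    and SD: "\<And>u h. u \<in> {0..1} \<Longrightarrow> h \<in> {0..1} \<Longrightarrow> \<bar>H (u + h) - 2 * H u + H (u - h)\<bar> \<le> B * h\<^sup>2"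
    using H_props[OF d1 d2 c2] by blast
  define A where "A = A0 + 1"
  have A: "0 < A" using A0 by (simp add: A_def)
  have Lip: "\<bar>H v - H u\<bar> \<le> A * \<bar>v - u\<bar>" if "u \<in> {-1..2}" "v \<in> {-1..2}" for u v
  proof -
    have "\<bar>H v - H u\<bar> \<le> A0 * \<bar>v - u\<bar>" by (rule Lip0[OF that])
    also have "\<dots> \<le> A * \<bar>v - u\<bar>" by (intro mult_right_mono) (auto simp: A_def)
    finally show ?thesis .
  qed
  define k where "k = \<epsilon>\<^sup>2 / (40 * A\<^sup>2)"
  have k0: "0 < k" using assms(2) A by (simp add: k_def)
  define d0 where "d0 = \<epsilon> / (10 * (A + B))"
  have d0: "0 < d0" using assms(2) A B by (simp add: d0_def)
  show ?thesis
    unfolding tendsto_MInfty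
  proof
    fix c :: real
    define b where "b = min d0 (k / (2 * (\<bar>c\<bar> + 1)))"
    have b0: "0 < b" using d0 k0 by (simp add: b_def)
    show "eventually (\<lambda>\<delta>. limsup (\<lambda>N. scaled_log N (Q_notC N T (\<eta>0 N) H \<delta> \<epsilon>)) < ereal c) (at_right 0)"
      unfolding eventually_at_right_field
    proof (intro exI conjI allI impI)
      show "0 < b" by (rule b0)
      fix \<delta> :: real assume d: "0 < \<delta>" and db: "\<delta> < b"
      have dlt: "\<delta> \<le> \<epsilon> / (10 * (A + B))" using db by (simp add: b_def d0_def)
      have "limsup (\<lambda>N. scaled_log N (Q_notC N T (\<eta>0 N) H \<delta> \<epsilon>)) \<le> ereal (- ((\<epsilon>\<^sup>2 / (40 * A\<^sup>2) / \<delta>) / 2))"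
        by (rule LS[OF per A B Lip SD assms(2) assms(1) d dlt])
      also have "\<dots> < ereal c"
      proof -
        have "\<delta> < k / (2 * (\<bar>c\<bar> + 1))" using db by (simp add: b_def)
        then have "\<delta> * (2 * (\<bar>c\<bar> + 1)) < k" by (simp add: field_simps)
        then have "2 * (\<bar>c\<bar> + 1) < k / \<delta>" using d by (simp add: field_simps)
        then have "- ((k / \<delta>) / 2) < c" by (rule aux_half)
        then show ?thesis by (simp add: k_def)
      qed
      finally show "limsup (\<lambda>N. scaled_log N (Q_notC N T (\<eta>0 N) H \<delta> \<epsilon>)) < ereal c" .
    qed
  qed
qed


end
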